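(* Let $n\ge2$, let $X\subset\mathbb{R}^n$ be finite with the Euclidean metric $d$, let $k\in\mathbb{N}$, and fix an increasing sequence $0=\epsilon_0<\epsilon_1<\epsilon_2<\cdots$. For any $i\in\mathbb{N}$, any $\nu$ with $\epsilon_{i-1}<\nu\le\epsilon_i$, any $\alpha\ge0$ and any $p\ne q\in X$: \[ p,q \text{ lie in the same connected component of } H(i)_\nu \iff p,q \text{ lie in the same connected component of } G(X,\rho^X)_\nu, \] and \[ p,q \text{ lie in the same connected component of } \mathcal{F}(i)_\alpha \iff p,q \text{ lie in the same connected component of } G(X,\rho^X)_\alpha. \]
   Context: DBSCAN$^*$: for $Y\subset X$ and $\epsilon>0$, $\mathcal{C}(Y,\epsilon)=\{p\in Y:|\{y\in Y:d(p,y)\le\epsilon\}|>k\}$, $\mathcal{N}(Y,\epsilon)=Y\setminus\mathcal{C}(Y,\epsilon)$, and $\mathcal{D}^*(Y,\epsilon)$ is the set of vertex sets of the connected components of the graph with vertex set $\mathcal{C}(Y,\epsilon)$ and an edge between distinct $p,q$ whenever $d(p,q)\le\epsilon$. For $Z\subset X$ and $p\in Z$, $\operatorname{core}^Z_k(p)$ is the distance from $p$ to a $k$-th nearest neighbour of $p$ in $Z$ (the $k$-th smallest value of $d(p,z)$, $z\in Z\setminus\{p\}$, with multiplicity) and $\rho^Z(p,q)=\max\{\operatorname{core}^Z_k(p),\operatorname{core}^Z_k(q),d(p,q)\}$ for $p\ne q$, $\rho^Z(p,p)=0$. Cubes (for a given $\epsilon>0$): $\mathcal{Q}(\epsilon)$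 is the collection of closed cubes $\{x\in\mathbb{R}^n: j_i\frac{\epsilon}{2\sqrt n}\le x_i\le (j_i+1)\frac{\epsilon}{2\sqrt n}\}$, $j\in\mathbb{Z}^n$; $S^m=\{x:\max_i|x_i-s_i|\le m\frac{\epsilon}{2\sqrt n}\text{ for some }s\in S\}$; $\mathcal{I}(B)=\{S\in\mathcal{Q}(\epsilon):S\cap B\ne\emptyset\}$. For $A\subset X$, $S\in\mathcal{I}(A)$ is an interior cube of $A$ if $S^1\cap X\subset A$ and every $T\in\mathcal{Q}(\epsilon)$ with $T\subset S^1$ lies in $\mathcal{I}(A)$, otherwise a boundary cube; $\partial A$ is the union of boundary cubes. For $Z\subset\mathbb{R}^n$, integer $N\ge0$: $Z^N=\bigcup_{S\in\mathcal{I}(Z)}S^N$, $Z^N_C=Z^N\cap C$. $\mathfrak{n},\mathfrak{m}$ are the smallest integers with $\mathfrak{n}\ge\sqrt n-1$, $\mathfrak{m}\ge2\sqrt n$; $\mathfrak{N}=\mathfrak{n}+\mathfrak{m}$. $F(Y,\epsilon)=\bigcup_{C\in\mathcal{D}^*(Y,\epsilon)}(\partial C)^{\mathfrak{N}}_C\cup\mathcal{N}(Y,\epsilon)$, cubes in $\mathcal{Q}(\epsilon)$. Graphs: $G(Z,w)$ is the complete weighted graph on finite $Z$ with weights $w(p,q)$; for a weighted graph $G$ and $\alpha\ge0$, $G_\alpha$ has the same vertex set and only the edges of weight $\le\alpha$. The union $G\cup H$ of weighted graphs has vertex set $V(G)\cup V(H)$, edge set $E(G)\cup E(H)$, and weight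 on a common edge the minimum of the two weights. Construction: $X_1=X$, $X_{i+1}=F(X_i,\epsilon_i)$ for $i\ge1$; $H(0)$ is the graph on $X_1$ with no edges; for $i\ge0$, $H(i+1)=\bigcup_{C\in\mathcal{D}^*(X_{i+1},\epsilon_{i+1})}G\big(B_{\epsilon_{i+1}}(C),\rho^{B_{\epsilon_{i+1}}(C)}\big)_{\epsilon_{i+1}}\cup H(i)$, where $B_{\epsilon_{i+1}}(C)=\{y\in X_{i+1}: d(y,C)\le\epsilon_{i+1}\}$. Finally $\mathcal{F}(i)=G(X_{i+1},\rho^{X_{i+1}})\cup H(i)$. *)

theory Defs
  imports "HOL-Analysis.Analysis" "HOL-Library.Extended_Real" "HOL-Library.Multiset"
begin

definition core_pts :: "nat \<Rightarrow> ('a::metric_space) set \<Rightarrow> real \<Rightarrow> 'a set" where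
  "core_pts k Y e = {p \<in> Y. card {y \<in> Y. dist p y \<le> e} > k}"

definition noise_pts :: "nat \<Rightarrow> ('a::metric_space) set \<Rightarrow> real \<Rightarrow> 'a set" where
  "noise_pts k Y e = Y - core_pts k Y e"

definition core_graph_rel :: "nat \<Rightarrow> ('a::metric_space) set \<Rightarrow> real \<Rightarrow> ('a \<times> 'a) set" where
  "core_graph_rel k Y e =
     {(p, q). p \<in> core_pts k Y e \<and> q \<in> core_pts k Y e \<and> p \<noteq> q \<and> dist p q \<le> e}"

definition Dstar :: "nat \<Rightarrow> ('a::metric_space) set \<Rightarrow> real \<Rightarrow> 'a set set" where
  "Dstar k Y e = {{q \<in> core_pts k Y e. (p, q) \<in> (core_graph_rel k Y e)\<^sup>*} | p. p \<in> core_pts k Y e}"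

text \<open>Conventions: the 0-th nearest neighbour of p is p itself (distance 0); if Z - {p}
  has fewer than k points, the core distance is infinite.\<close>
definition core_dist :: "nat \<Rightarrow> ('a::metric_space) set \<Rightarrow> 'a \<Rightarrow> ereal" where
  "core_dist k Z p =
     (if k = 0 then 0
      else if k \<le> card (Z - {p})
      then ereal (sorted_list_of_multiset (image_mset (dist p) (mset_set (Z - {p}))) ! (k - 1))
      else \<infinity>)"

definition rho :: "nat \<Rightarrow> ('a::metric_space) set \<Rightarrow> 'a \<Rightarrow> 'a \<Rightarrow> ereal" where
  "rho k Z p q = (if p = q then 0
                  else max (core_dist k Z p) (max (core_dist k Z q) (ereal (dist p q))))"

text \<open>A weighted graph is a vertex set together with a weight function;
  weight \<infinity> means ``no edge''.\<close>
type_synonym 'a wgraph = "'a set \<times> ('a \<Rightarrow> 'a \<Rightarrow> ereal)"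

definition complete_graph :: "'a set \<Rightarrow> ('a \<Rightarrow> 'a \<Rightarrow> ereal) \<Rightarrow> 'a wgraph" where
  "complete_graph Z w = (Z, \<lambda>p q. if p \<in> Z \<and> q \<in> Z \<and> p \<noteq> q then w p q else \<infinity>)"

definition trunc_graph :: "'a wgraph \<Rightarrow> real \<Rightarrow> 'a wgraph" where
  "trunc_graph G a = (fst G, \<lambda>p q. if snd G p q \<le> ereal a then snd G p q else \<infinity>)"

definition graph_union :: "'a wgraph \<Rightarrow> 'a wgraph \<Rightarrow> 'a wgraph" where
  "graph_union G H = (fst G \<union> fst H, \<lambda>p q. min (snd G p q) (snd H p q))"

definition graph_Union :: "'a wgraph set \<Rightarrow> 'a wgraph" where
  "graph_Union S = (\<Union> (fst ` S), \<lambda>p q. INF G\<in>S. snd G p q)"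

definition same_comp :: "'a wgraph \<Rightarrow> real \<Rightarrow> 'a \<Rightarrow> 'a \<Rightarrow> bool" where
  "same_comp G a p q \<longleftrightarrow> p \<in> fst G \<and> q \<in> fst G \<and>
     (p, q) \<in> {(x, y). x \<in> fst G \<and> y \<in> fst G \<and> x \<noteq> y \<and>
                      (snd G x y \<le> ereal a \<or> snd G y x \<le> ereal a)}\<^sup>*"

definition side_len :: "real \<Rightarrow> nat \<Rightarrow> real" where
  "side_len e n = e / (2 * sqrt (real n))"

definition cube :: "real \<Rightarrow> int ^ 'n \<Rightarrow> (real ^ 'n::finite) set" where
  "cube e j = {x. \<forall>i. of_int (j $ i) * side_len e CARD('n) \<le> x $ i \<and>
                      x $ i \<le> (of_int (j $ i) + 1) * side_len e CARD('n)}"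

definition Qcubes :: "real \<Rightarrow> (real ^ 'n::finite) set set" where
  "Qcubes e = range (cube e)"

definition thicken :: "real \<Rightarrow> nat \<Rightarrow> (real ^ 'n::finite) set \<Rightarrow> (real ^ 'n) set" where
  "thicken e m S = {x. \<exists>s\<in>S. \<forall>i. \<bar>x $ i - s $ i\<bar> \<le> real m * side_len e CARD('n)}"

definition Icubes :: "real \<Rightarrow> (real ^ 'n::finite) set \<Rightarrow> (real ^ 'n) set set" where
  "Icubes e B = {S \<in> Qcubes e. S \<inter> B \<noteq> {}}"

text \<open>Interior cube of A relative to the ambient (current) data set Y.\<close>
definition interior_cube :: "real \<Rightarrow> (real ^ 'n::finite) set \<Rightarrow> (real ^ 'n) set \<Rightarrow> (real ^ 'n) set \<Rightarrow> bool" where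
  "interior_cube e Y A S \<longleftrightarrow> S \<in> Icubes e A \<and> thicken e 1 S \<inter> Y \<subseteq> A \<and>
     (\<forall>T \<in> Qcubes e. T \<subseteq> thicken e 1 S \<longrightarrow> T \<in> Icubes e A)"

definition bdry :: "real \<Rightarrow> (real ^ 'n::finite) set \<Rightarrow> (real ^ 'n) set \<Rightarrow> (real ^ 'n) set" where
  "bdry e Y A = \<Union> {S \<in> Icubes e A. \<not> interior_cube e Y A S}"

definition nbhd :: "real \<Rightarrow> nat \<Rightarrow> (real ^ 'n::finite) set \<Rightarrow> (real ^ 'n) set" where
  "nbhd e N Z = (\<Union>S \<in> Icubes e Z. thicken e N S)"

definition frakN :: "nat \<Rightarrow> nat" where
  "frakN n = nat \<lceil>sqrt (real n) - 1\<rceil> + nat \<lceil>2 * sqrt (real n)\<rceil>"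

definition Ffilter :: "nat \<Rightarrow> (real ^ 'n::finite) set \<Rightarrow> real \<Rightarrow> (real ^ 'n) set" where
  "Ffilter k Y e = (\<Union>C \<in> Dstar k Y e. nbhd e (frakN CARD('n)) (bdry e Y C) \<inter> C) \<union> noise_pts k Y e"

text \<open>Xs k eps X m is X_(m+1): X_1 = X, X_(i+1) = F(X_i, eps_i).\<close>
fun Xs :: "nat \<Rightarrow> (nat \<Rightarrow> real) \<Rightarrow> (real ^ 'n::finite) set \<Rightarrow> nat \<Rightarrow> (real ^ 'n) set" where
  "Xs k eps X 0 = X"
| "Xs k eps X (Suc m) = Ffilter k (Xs k eps X m) (eps (Suc m))"

definition Bset :: "('a::metric_space) set \<Rightarrow> real \<Rightarrow> 'a set \<Rightarrow> 'a set" where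
  "Bset Y e C = {y \<in> Y. infdist y C \<le> e}"

fun Hgraph :: "nat \<Rightarrow> (nat \<Rightarrow> real) \<Rightarrow> (real ^ 'n::finite) set \<Rightarrow> nat \<Rightarrow> (real ^ 'n) wgraph" where
  "Hgraph k eps X 0 = (X, \<lambda>p q. \<infinity>)"
| "Hgraph k eps X (Suc i) =
     graph_union
       (graph_Union
          {trunc_graph
             (complete_graph (Bset (Xs k eps X i) (eps (Suc i)) C)
                             (rho k (Bset (Xs k eps X i) (eps (Suc i)) C)))
             (eps (Suc i)) | C. C \<in> Dstar k (Xs k eps X i) (eps (Suc i))})
       (Hgraph k eps X i)"

definition Fgraph :: "nat \<Rightarrow> (nat \<Rightarrow> real) \<Rightarrow> (real ^ 'n::finite) set \<Rightarrow> nat \<Rightarrow> (real ^ 'n) wgraph" where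
  "Fgraph k eps X i = graph_union (complete_graph (Xs k eps X i) (rho k (Xs k eps X i))) (Hgraph k eps X i)"

end

theory Submission
  imports Defs
begin

lemma sorted_nth_le_iff:
  fixes L :: "real list"
  assumes "sorted L" "1 \<le> k" "k \<le> length L"
  shows "(L ! (k - 1) \<le> a) \<longleftrightarrow> k \<le> length (filter (\<lambda>v. v \<le> a) L)"
proof
  assume h: "L ! (k - 1) \<le> a"
  have "{0..<k} \<subseteq> {i. i < length L \<and> L ! i \<le> a}"
  proof
    fix i assume "i \<in> {0..<k}"
    then have "i \<le> k - 1" "i < length L" using assms by auto
    then have "L ! i \<le> L ! (k-1)" using assms sorted_nth_mono by (metis diff_less less_le_trans zero_less_one)
    then show "i \<in> {i. i < length L \<and> L ! i \<le> a}" using h \<open>i < length L\<close> by auto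
  qed
  then have "card {0..<k} \<le> card {i. i < length L \<and> L ! i \<le> a}" by (intro card_mono) auto
  then show "k \<le> length (filter (\<lambda>v. v \<le> a) L)" by (simp add: length_filter_conv_card)
next
  assume h: "k \<le> length (filter (\<lambda>v. v \<le> a) L)"
  show "L ! (k - 1) \<le> a"
  proof (rule ccontr)
    assume "\<not> L ! (k - 1) \<le> a"
    have "{i. i < length L \<and> L ! i \<le> a} \<subseteq> {0..<k-1}"
    proof
      fix i assume i: "i \<in> {i. i < length L \<and> L ! i \<le> a}"
      show "i \<in> {0..<k-1}"
      proof (rule ccontr)
        assume "i \<notin> {0..<k-1}"
        then have "k - 1 \<le> i" by auto
        then have "L ! (k-1) \<le> L ! i" using assms i sorted_nth_mono by blast
        then show False using i \<open>\<not> L ! (k - 1) \<le> a\<close> by auto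
      qed
    qed
    then have "card {i. i < length L \<and> L ! i \<le> a} \<le> k - 1" by (metis card_atLeastLessThan card_mono finite_atLeastLessThan minus_nat.diff_0)
    then show False using h assms by (simp add: length_filter_conv_card)
  qed
qed

definition cnt :: "('a::metric_space) set \<Rightarrow> 'a \<Rightarrow> real \<Rightarrow> nat" where
  "cnt Z x a = card {z \<in> Z - {x}. dist x z \<le> a}"

lemma length_filter_sorted_mset:
  assumes "finite Z"
  shows "length (filter (\<lambda>v. v \<le> a) (sorted_list_of_multiset (image_mset (dist x) (mset_set (Z - {x})))))
         = cnt Z x a"
proof -
  let ?M = "image_mset (dist x) (mset_set (Z - {x}))"
  have "length (filter (\<lambda>v. v \<le> a) (sorted_list_of_multiset ?M)) = size (filter_mset (\<lambda>v. v \<le> a) ?M)"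
    by (metis mset_filter mset_sorted_list_of_multiset size_mset)
  also have "\<dots> = size (image_mset (dist x) (filter_mset (\<lambda>z. dist x z \<le> a) (mset_set (Z - {x}))))"
    by (simp add: filter_mset_image_mset)
  also have "\<dots> = size (mset_set {z \<in> Z - {x}. dist x z \<le> a})"
    using assms by (simp add: filter_mset_mset_set)
  also have "\<dots> = cnt Z x a" using assms by (simp add: cnt_def)
  finally show ?thesis .
qed

lemma core_dist_le_iff:
  assumes "finite Z" "a \<ge> 0"
  shows "core_dist k Z x \<le> ereal a \<longleftrightarrow> k \<le> cnt Z x a"
proof (cases "k = 0")
  case True then show ?thesis using assms by (simp add: core_dist_def)
next
  case False
  let ?L = "sorted_list_of_multiset (image_mset (dist x) (mset_set (Z - {x})))"
  have len: "length ?L = card (Z - {x})"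
    by (metis mset_sorted_list_of_multiset size_mset size_image_mset size_mset_set)
  have cle: "cnt Z x a \<le> card (Z - {x})" unfolding cnt_def using assms by (intro card_mono) auto
  show ?thesis
  proof (cases "k \<le> card (Z - {x})")
    case True
    then have "core_dist k Z x = ereal (?L ! (k-1))" using False by (simp add: core_dist_def)
    moreover have "(?L ! (k - 1) \<le> a) \<longleftrightarrow> k \<le> length (filter (\<lambda>v. v \<le> a) ?L)"
      by (rule sorted_nth_le_iff) (use False True len in auto)
    ultimately show ?thesis using length_filter_sorted_mset[OF assms(1)] by simp
  next
    case f2: False
    then show ?thesis using False cle by (simp add: core_dist_def)
  qed
qed


lemma cnt_mono_a: "finite Z \<Longrightarrow> a \<le> b \<Longrightarrow> cnt Z x a \<le> cnt Z x b"
  unfolding cnt_def by (intro card_mono) auto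

lemma cnt_mono_set: "finite W \<Longrightarrow> Z \<subseteq> W \<Longrightarrow> cnt Z x a \<le> cnt W x a"
  unfolding cnt_def by (intro card_mono) auto

lemma cnt_le_card: "finite Z \<Longrightarrow> cnt Z x a \<le> card (Z - {x})"
  unfolding cnt_def by (intro card_mono) auto

lemma core_dist_nonneg: "core_dist k Z x \<ge> 0"
proof -
  let ?L = "sorted_list_of_multiset (image_mset (dist x) (mset_set (Z - {x})))"
  have len: "length ?L = card (Z - {x})"
    by (metis mset_sorted_list_of_multiset size_mset size_image_mset size_mset_set)
  have "?L ! (k - 1) \<ge> 0" if "k \<noteq> 0" "k \<le> card (Z - {x})"
  proof -
    have "k - 1 < length ?L" using that len by linarith
    then have "?L ! (k - 1) \<in> set ?L" by (rule nth_mem)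
    then have "?L ! (k - 1) \<in># image_mset (dist x) (mset_set (Z - {x}))"
      by (simp only: set_sorted_list_of_multiset)
    then show ?thesis by auto
  qed
  then show ?thesis unfolding core_dist_def by simp
qed

lemma core_dist_mono:
  assumes "finite W" "Z \<subseteq> W"
  shows "core_dist k W x \<le> core_dist k Z x"
proof (cases "core_dist k Z x")
  case (real c)
  have "c \<ge> 0" using core_dist_nonneg[of k Z x] real by simp
  have fZ: "finite Z" using assms finite_subset by blast
  have "k \<le> cnt Z x c" using core_dist_le_iff[OF fZ \<open>c \<ge> 0\<close>, of k x] real by simp
  also have "\<dots> \<le> cnt W x c" by (rule cnt_mono_set[OF assms])
  finally show ?thesis using core_dist_le_iff[OF assms(1) \<open>c \<ge> 0\<close>, of k x] real by simp
next
  case PInf then show ?thesis by simp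
next
  case MInf then show ?thesis using core_dist_nonneg[of k Z x] by simp
qed

lemma max3_mono: "a \<le> a' \<Longrightarrow> b \<le> b' \<Longrightarrow> max a (max b c) \<le> max a' (max b' (c::ereal))"
  by (metis max.mono order_refl)

lemma rho_mono:
  assumes "finite W" "Z \<subseteq> W"
  shows "rho k W x y \<le> rho k Z x y"
proof (cases "x = y")
  case True then show ?thesis by (simp add: rho_def)
next
  case False
  show ?thesis unfolding rho_def if_not_P[OF False]
    by (rule max3_mono[OF core_dist_mono[OF assms] core_dist_mono[OF assms]])
qed

lemma rho_sym: "rho k Z x y = rho k Z y x"
  unfolding rho_def by (auto simp: dist_commute max.left_commute)

lemma core_pts_iff:
  assumes "finite Y" "e \<ge> 0"
  shows "p \<in> core_pts k Y e \<longleftrightarrow> p \<in> Y \<and> k \<le> cnt Y p e"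
proof (cases "p \<in> Y")
  case True
  have "{y \<in> Y. dist p y \<le> e} = insert p {z \<in> Y - {p}. dist p z \<le> e}" using True assms by auto
  then have "card {y \<in> Y. dist p y \<le> e} = Suc (cnt Y p e)" using assms unfolding cnt_def
    by (simp add: card_insert_disjoint)
  then show ?thesis using True unfolding core_pts_def by auto
next
  case False then show ?thesis unfolding core_pts_def by auto
qed

lemma core_pts_sub: "core_pts k Y e \<subseteq> Y" unfolding core_pts_def by auto

lemma core_card: "p \<in> core_pts k Y e \<Longrightarrow> card {y \<in> Y. dist p y \<le> e} > k"
  unfolding core_pts_def by auto

section \<open>Clusters\<close>

abbreviation "cl k Y e p \<equiv> {q \<in> core_pts k Y e. (p, q) \<in> (core_graph_rel k Y e)\<^sup>*}"

lemma cgr_sym: "sym (core_graph_rel k Y e)"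
  unfolding core_graph_rel_def sym_def by (auto simp: dist_commute)

lemma cgr_star_sym: "(p, q) \<in> (core_graph_rel k Y e)\<^sup>* \<Longrightarrow> (q, p) \<in> (core_graph_rel k Y e)\<^sup>*"
  by (metis cgr_sym sym_rtrancl symD)

lemma cgr_star_core:
  assumes "(x, y) \<in> (core_graph_rel k Y e)\<^sup>*"
  shows "y = x \<or> y \<in> core_pts k Y e"
  using assms by (cases rule: rtranclE) (auto simp: core_graph_rel_def)

lemma Dstar_E:
  assumes "C \<in> Dstar k Y e"
  obtains p where "p \<in> core_pts k Y e" "C = cl k Y e p"
  using assms unfolding Dstar_def by auto

lemma cl_in_Dstar: "p \<in> core_pts k Y e \<Longrightarrow> cl k Y e p \<in> Dstar k Y e"
  unfolding Dstar_def by auto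

lemma cl_self: "p \<in> core_pts k Y e \<Longrightarrow> p \<in> cl k Y e p" by auto

lemma Dstar_core: "C \<in> Dstar k Y e \<Longrightarrow> C \<subseteq> core_pts k Y e"
  by (auto elim: Dstar_E)

lemma Dstar_sub: "C \<in> Dstar k Y e \<Longrightarrow> C \<subseteq> Y"
  using Dstar_core core_pts_sub by blast

lemma Dstar_pair:
  assumes "C \<in> Dstar k Y e" "x \<in> C" "y \<in> C"
  shows "(x, y) \<in> (core_graph_rel k Y e)\<^sup>*"
proof -
  obtain p where "C = cl k Y e p" using assms(1) by (auto elim: Dstar_E)
  then have "(p, x) \<in> (core_graph_rel k Y e)\<^sup>*" "(p, y) \<in> (core_graph_rel k Y e)\<^sup>*" using assms by auto
  then show ?thesis using cgr_star_sym rtrancl_trans by metis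
qed

lemma Dstar_reach:
  assumes "C \<in> Dstar k Y e" "x \<in> C" "(x, y) \<in> (core_graph_rel k Y e)\<^sup>*"
  shows "y \<in> C"
proof -
  obtain p where C: "C = cl k Y e p" using assms(1) by (auto elim: Dstar_E)
  then have "(p, y) \<in> (core_graph_rel k Y e)\<^sup>*" using assms rtrancl_trans by fastforce
  moreover have "y \<in> core_pts k Y e" using cgr_star_core[OF assms(3)] assms C by auto
  ultimately show ?thesis using C by auto
qed

lemma Dstar_closed:
  assumes "C \<in> Dstar k Y e" "x \<in> C" "y \<in> core_pts k Y e" "dist x y \<le> e"
  shows "y \<in> C"
proof (cases "x = y")
  case True then show ?thesis using assms by simp
next
  case False
  have "x \<in> core_pts k Y e" using assms Dstar_core by blast
  then have "(x, y) \<in> core_graph_rel k Y e" using assms False unfolding core_graph_rel_def by auto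
  then show ?thesis using Dstar_reach[OF assms(1,2)] by blast
qed

lemma Dstar_eq:
  assumes "C \<in> Dstar k Y e" "C' \<in> Dstar k Y e" "x \<in> C" "x \<in> C'"
  shows "C = C'"
proof -
  obtain p where C: "C = cl k Y e p" using assms(1) by (auto elim: Dstar_E)
  have "C \<subseteq> C'"
  proof
    fix y assume "y \<in> C"
    then have "(x, y) \<in> (core_graph_rel k Y e)\<^sup>*" using Dstar_pair assms by blast
    then show "y \<in> C'" using Dstar_reach[OF assms(2,4)] by blast
  qed
  moreover have "C' \<subseteq> C"
  proof
    fix y assume "y \<in> C'"
    then have "(x, y) \<in> (core_graph_rel k Y e)\<^sup>*" using Dstar_pair assms by blast
    then show "y \<in> C" using Dstar_reach[OF assms(1,3)] by blast
  qed
  ultimately show ?thesis by blast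
qed

lemma finite_Dstar_elem: "finite Y \<Longrightarrow> C \<in> Dstar k Y e \<Longrightarrow> finite C"
  by (meson Dstar_sub finite_subset)

lemma Ffilter_sub: "Ffilter k Y e \<subseteq> Y" for Y :: "(real ^ 'n::finite) set"
proof -
  have "(\<Union>C \<in> Dstar k Y e. nbhd e (frakN CARD('n)) (bdry e Y C) \<inter> C) \<subseteq> Y"
    by (rule UN_least) (use Dstar_sub in fast)
  moreover have "noise_pts k Y e \<subseteq> Y" unfolding noise_pts_def by (rule Diff_subset)
  ultimately show ?thesis unfolding Ffilter_def by (rule Un_least)
qed

lemma noise_kept: "y \<in> Y \<Longrightarrow> y \<notin> core_pts k Y e \<Longrightarrow> y \<in> Ffilter k Y e"
  unfolding Ffilter_def noise_pts_def by (rule UnI2) (rule DiffI)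

lemma kept_nbhd: "C \<in> Dstar k Y e \<Longrightarrow> y \<in> C \<Longrightarrow> y \<in> nbhd e (frakN CARD('n)) (bdry e Y C) \<Longrightarrow> y \<in> Ffilter k Y e"
  for Y :: "(real ^ 'n::finite) set"
  unfolding Ffilter_def by (rule UnI1) (rule UN_I, assumption, rule IntI)

lemma removed_core: "y \<in> Y \<Longrightarrow> y \<notin> Ffilter k Y e \<Longrightarrow> y \<in> core_pts k Y e"
  using noise_kept by blast

lemma Xs_sub: "Xs k eps X m \<subseteq> X"
proof (induction m)
  case (Suc m) then show ?case using Ffilter_sub by (metis Xs.simps(2) order_trans)
qed simp



section \<open>Graph connectivity\<close>

definition gE :: "'a wgraph \<Rightarrow> real \<Rightarrow> ('a \<times> 'a) set" where
  "gE G a = {(x, y). x \<in> fst G \<and> y \<in> fst G \<and> x \<noteq> y \<and> (snd G x y \<le> ereal a \<or> snd G y x \<le> ereal a)}"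

lemma same_comp_alt: "same_comp G a p q \<longleftrightarrow> p \<in> fst G \<and> q \<in> fst G \<and> (p, q) \<in> (gE G a)\<^sup>*"
  unfolding same_comp_def gE_def by simp

lemma gE_sym: "(x, y) \<in> gE G a \<Longrightarrow> (y, x) \<in> gE G a"
  unfolding gE_def by auto

lemma same_comp_refl: "p \<in> fst G \<Longrightarrow> same_comp G a p p"
  by (simp add: same_comp_alt)

lemma same_comp_trans: "same_comp G a p q \<Longrightarrow> same_comp G a q r \<Longrightarrow> same_comp G a p r"
  by (auto simp: same_comp_alt)

lemma same_comp_sym: "same_comp G a p q \<Longrightarrow> same_comp G a q p"
proof -
  have "sym (gE G a)" by (metis gE_sym symI)
  then have "sym ((gE G a)\<^sup>*)" by (rule sym_rtrancl)
  then show "same_comp G a p q \<Longrightarrow> same_comp G a q p" by (auto simp: same_comp_alt sym_def)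
qed

lemma same_comp_edge: "x \<in> fst G \<Longrightarrow> y \<in> fst G \<Longrightarrow> x \<noteq> y \<Longrightarrow> snd G x y \<le> ereal a \<Longrightarrow> same_comp G a x y"
  by (auto simp: same_comp_alt gE_def)

lemma same_comp_transfer:
  assumes sub: "fst G \<subseteq> fst G'"
    and edge: "\<And>x y. x \<in> fst G \<Longrightarrow> y \<in> fst G \<Longrightarrow> x \<noteq> y \<Longrightarrow> snd G x y \<le> ereal a \<Longrightarrow> same_comp G' b x y"
    and sc: "same_comp G a p q"
  shows "same_comp G' b p q"
proof -
  have p: "p \<in> fst G" and pq: "(p, q) \<in> (gE G a)\<^sup>*" using sc by (auto simp: same_comp_alt)
  from pq show ?thesis
  proof (induction rule: rtrancl_induct)
    case base then show ?case using p sub by (auto intro: same_comp_refl)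
  next
    case (step y z)
    have yz: "y \<in> fst G" "z \<in> fst G" "y \<noteq> z" "snd G y z \<le> ereal a \<or> snd G z y \<le> ereal a"
      using step(2) unfolding gE_def by auto
    have "same_comp G' b y z"
    proof (cases "snd G y z \<le> ereal a")
      case True then show ?thesis using edge yz by simp
    next
      case False
      then have "same_comp G' b z y" using edge yz by simp
      then show ?thesis by (rule same_comp_sym)
    qed
    then show ?case by (rule same_comp_trans[OF step(3)])
  qed
qed

lemma same_comp_mono:
  assumes "fst G \<subseteq> fst G'" "\<And>x y. x \<in> fst G \<Longrightarrow> y \<in> fst G \<Longrightarrow> snd G' x y \<le> snd G x y" "a \<le> b"
    and "same_comp G a p q"
  shows "same_comp G' b p q"
proof (rule same_comp_transfer[OF assms(1) _ assms(4)])
  fix x y assume hh: "x \<in> fst G" "y \<in> fst G" "x \<noteq> y" "snd G x y \<le> ereal a"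
  moreover have "snd G' x y \<le> ereal b"
  proof -
    have "snd G' x y \<le> snd G x y" using assms(2) hh(1,2) by simp
    also have "\<dots> \<le> ereal a" using hh(4) by simp
    also have "\<dots> \<le> ereal b" using assms(3) by simp
    finally show ?thesis .
  qed
  ultimately show "same_comp G' b x y" using assms(1) by (auto intro: same_comp_edge)
qed

lemma fst_complete[simp]: "fst (complete_graph Z w) = Z" by (simp add: complete_graph_def)
lemma snd_complete: "snd (complete_graph Z w) x y = (if x \<in> Z \<and> y \<in> Z \<and> x \<noteq> y then w x y else \<infinity>)"
  by (simp add: complete_graph_def)
lemma fst_trunc[simp]: "fst (trunc_graph G a) = fst G" by (simp add: trunc_graph_def)
lemma snd_trunc: "snd (trunc_graph G a) x y = (if snd G x y \<le> ereal a then snd G x y else \<infinity>)"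
  by (simp add: trunc_graph_def)
lemma fst_union[simp]: "fst (graph_union G H) = fst G \<union> fst H" by (simp add: graph_union_def)
lemma snd_union: "snd (graph_union G H) x y = min (snd G x y) (snd H x y)" by (simp add: graph_union_def)
lemma fst_Union[simp]: "fst (graph_Union S) = \<Union> (fst ` S)" by (simp add: graph_Union_def)
lemma snd_Union: "snd (graph_Union S) x y = (INF G\<in>S. snd G x y)" by (simp add: graph_Union_def)

lemma Bset_sub: "Bset Y e C \<subseteq> Y" unfolding Bset_def by auto

lemma fst_Hgraph: "fst (Hgraph k eps X m) = X"
proof (induction m)
  case 0 then show ?case by simp
next
  case (Suc m)
  let ?S = "{trunc_graph
             (complete_graph (Bset (Xs k eps X m) (eps (Suc m)) C)
                             (rho k (Bset (Xs k eps X m) (eps (Suc m)) C)))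
             (eps (Suc m)) | C. C \<in> Dstar k (Xs k eps X m) (eps (Suc m))}"
  have "\<Union> (fst ` ?S) \<subseteq> X"
  proof (rule UN_least)
    fix G assume "G \<in> ?S"
    then obtain C where G: "G = trunc_graph
             (complete_graph (Bset (Xs k eps X m) (eps (Suc m)) C)
                             (rho k (Bset (Xs k eps X m) (eps (Suc m)) C)))
             (eps (Suc m))" by blast
    have "Bset (Xs k eps X m) (eps (Suc m)) C \<subseteq> X"
      by (rule order_trans[OF Bset_sub Xs_sub])
    then show "fst G \<subseteq> X" unfolding G by simp
  qed
  then show ?case using Suc by (simp add: Un_absorb1)
qed

lemma fst_Fgraph: "fst (Fgraph k eps X m) = X"
  unfolding Fgraph_def by (simp add: fst_Hgraph Un_absorb1[OF Xs_sub])

section \<open>Soundness\<close>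

lemma H_sound:
  assumes "finite X" "x \<in> X" "y \<in> X" "x \<noteq> y"
  shows "rho k X x y \<le> snd (Hgraph k eps X m) x y"
proof (induction m)
  case 0 then show ?case by simp
next
  case (Suc m)
  let ?S = "{trunc_graph
             (complete_graph (Bset (Xs k eps X m) (eps (Suc m)) C)
                             (rho k (Bset (Xs k eps X m) (eps (Suc m)) C)))
             (eps (Suc m)) | C. C \<in> Dstar k (Xs k eps X m) (eps (Suc m))}"
  have hS: "rho k X x y \<le> snd G x y" if GS: "G \<in> ?S" for G
  proof -
    obtain C where G: "G = trunc_graph
             (complete_graph (Bset (Xs k eps X m) (eps (Suc m)) C)
                             (rho k (Bset (Xs k eps X m) (eps (Suc m)) C)))
             (eps (Suc m))" using GS by blast
    have "Bset (Xs k eps X m) (eps (Suc m)) C \<subseteq> X" by (rule order_trans[OF Bset_sub Xs_sub])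
    then have "rho k X x y \<le> rho k (Bset (Xs k eps X m) (eps (Suc m)) C) x y"
      using rho_mono assms(1) by metis
    then show ?thesis unfolding G snd_trunc snd_complete by auto
  qed
  then have "rho k X x y \<le> snd (graph_Union ?S) x y" unfolding snd_Union le_INF_iff using hS by blast
  then show ?case using Suc by (simp add: snd_union)
qed

lemma F_sound:
  assumes "finite X" "x \<in> X" "y \<in> X" "x \<noteq> y"
  shows "rho k X x y \<le> snd (Fgraph k eps X m) x y"
proof -
  have "rho k X x y \<le> rho k (Xs k eps X m) x y" using rho_mono[OF assms(1) Xs_sub] by metis
  then have "rho k X x y \<le> snd (complete_graph (Xs k eps X m) (rho k (Xs k eps X m))) x y"
    by (auto simp: snd_complete)
  then show ?thesis using H_sound[OF assms, where k=k and eps=eps and m=m] unfolding Fgraph_def snd_union by simp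
qed

lemma sound_same_comp:
  assumes "fst G = X" "\<And>x y. x \<in> X \<Longrightarrow> y \<in> X \<Longrightarrow> x \<noteq> y \<Longrightarrow> rho k X x y \<le> snd G x y"
    and "same_comp G a p q"
  shows "same_comp (complete_graph X (rho k X)) a p q"
proof (rule same_comp_transfer[OF _ _ assms(3)])
  show "fst G \<subseteq> fst (complete_graph X (rho k X))" using assms(1) by simp
next
  fix x y assume h: "x \<in> fst G" "y \<in> fst G" "x \<noteq> y" "snd G x y \<le> ereal a"
  have "rho k X x y \<le> snd G x y" using assms(1,2) h(1-3) by simp
  then have "rho k X x y \<le> ereal a" using h(4) by (rule order_trans)
  then show "same_comp (complete_graph X (rho k X)) a x y"
    using h assms(1) by (intro same_comp_edge) (auto simp: snd_complete)
qed



section \<open>Cube geometry\<close>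

abbreviation sl :: "real \<Rightarrow> 'n::finite itself \<Rightarrow> real" where
  "sl e _ \<equiv> side_len e CARD('n)"

lemma side_pos: "e > 0 \<Longrightarrow> side_len e CARD('n::finite) > 0"
  unfolding side_len_def by simp

lemma e_eq_side: "e = 2 * sqrt (real CARD('n::finite)) * side_len e CARD('n)"
  unfolding side_len_def by simp

lemma real_nat_ceiling_ge: "real (nat \<lceil>x\<rceil>) \<ge> x"
  by (metis le_of_int_ceiling nat_0_le nat_le_0 of_int_le_0_iff of_nat_0 of_nat_nat order_trans linear)

lemma frakN_real: "real (frakN n) = real (nat \<lceil>sqrt (real n) - 1\<rceil>) + real (nat \<lceil>2 * sqrt (real n)\<rceil>)"
  unfolding frakN_def by (simp only: of_nat_add)

lemma frakN_ge1: "real (frakN n) \<ge> 2 * sqrt (real n)"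
proof -
  have "real (nat \<lceil>2 * sqrt (real n)\<rceil>) \<ge> 2 * sqrt (real n)" by (rule real_nat_ceiling_ge)
  moreover have "real (nat \<lceil>sqrt (real n) - 1\<rceil>) \<ge> 0" by simp
  ultimately show ?thesis unfolding frakN_real by linarith
qed

lemma frakN_ge2: "real (frakN n) + 1 \<ge> 3 * sqrt (real n)"
proof -
  have "real (nat \<lceil>2 * sqrt (real n)\<rceil>) \<ge> 2 * sqrt (real n)" by (rule real_nat_ceiling_ge)
  moreover have "real (nat \<lceil>sqrt (real n) - 1\<rceil>) \<ge> sqrt (real n) - 1" by (rule real_nat_ceiling_ge)
  ultimately show ?thesis unfolding frakN_real by linarith
qed

lemma mem_cube: "x \<in> cube e j \<longleftrightarrow> (\<forall>i. of_int (j $ i) * side_len e CARD('n) \<le> x $ i \<and>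
                      x $ i \<le> (of_int (j $ i) + 1) * side_len e CARD('n))"
  for x :: "real ^ 'n::finite"
  unfolding cube_def by simp

lemma cube_in_Q: "cube e j \<in> Qcubes e" unfolding Qcubes_def by simp

lemma Q_E: "S \<in> Qcubes e \<Longrightarrow> (\<And>j. S = cube e j \<Longrightarrow> P) \<Longrightarrow> P"
  unfolding Qcubes_def by auto

lemma cube_at:
  fixes x :: "real ^ 'n::finite"
  assumes "e > 0"
  shows "x \<in> cube e (\<chi> i. \<lfloor>x $ i / side_len e CARD('n)\<rfloor>)"
proof -
  let ?s = "side_len e CARD('n)"
  have s: "?s > 0" using side_pos[OF assms] by simp
  have "of_int \<lfloor>x $ i / ?s\<rfloor> * ?s \<le> x $ i \<and> x $ i \<le> (of_int \<lfloor>x $ i / ?s\<rfloor> + 1) * ?s" for i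
  proof -
    have a: "of_int \<lfloor>x $ i / ?s\<rfloor> \<le> x $ i / ?s" by (rule of_int_floor_le)
    have b: "x $ i / ?s \<le> of_int \<lfloor>x $ i / ?s\<rfloor> + 1" using real_of_int_floor_add_one_ge by simp
    have c1: "of_int \<lfloor>x $ i / ?s\<rfloor> * ?s \<le> x $ i" using iffD1[OF pos_le_divide_eq[OF s] a] .
    have c2: "x $ i \<le> (of_int \<lfloor>x $ i / ?s\<rfloor> + 1) * ?s" using iffD1[OF pos_divide_le_eq[OF s] b] .
    show ?thesis using c1 c2 by simp
  qed
  then show ?thesis unfolding mem_cube by simp
qed

lemma closed_cube: "closed (cube e j :: (real ^ 'n::finite) set)"
proof -
  have "cube e j = (\<Inter>i. (\<lambda>x. x $ i) -` {of_int (j $ i) * side_len e CARD('n) .. (of_int (j $ i) + 1) * side_len e CARD('n)})"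
    unfolding cube_def by auto
  then show ?thesis by (simp add: closed_INT closed_vimage_vec_nth)
qed

lemma mem_thicken_cube:
  fixes x :: "real ^ 'n::finite"
  assumes "e > 0"
  shows "x \<in> thicken e N (cube e j) \<longleftrightarrow>
    (\<forall>i. (of_int (j $ i) - real N) * side_len e CARD('n) \<le> x $ i \<and>
         x $ i \<le> (of_int (j $ i) + 1 + real N) * side_len e CARD('n))"
proof -
  let ?s = "side_len e CARD('n)"
  have s: "?s > 0" using side_pos[OF assms] by simp
  show ?thesis
  proof
    assume "x \<in> thicken e N (cube e j)"
    then obtain v where v: "v \<in> cube e j" "\<And>i. \<bar>x $ i - v $ i\<bar> \<le> real N * ?s"
      unfolding thicken_def by auto
    show "\<forall>i. (of_int (j $ i) - real N) * ?s \<le> x $ i \<and> x $ i \<le> (of_int (j $ i) + 1 + real N) * ?s"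
    proof
      fix i
      have "of_int (j $ i) * ?s \<le> v $ i" "v $ i \<le> (of_int (j $ i) + 1) * ?s" using v(1) unfolding mem_cube by auto
      moreover have "\<bar>x $ i - v $ i\<bar> \<le> real N * ?s" by (rule v(2))
      ultimately show "(of_int (j $ i) - real N) * ?s \<le> x $ i \<and> x $ i \<le> (of_int (j $ i) + 1 + real N) * ?s"
        by (auto simp: algebra_simps abs_le_iff)
    qed
  next
    assume h: "\<forall>i. (of_int (j $ i) - real N) * ?s \<le> x $ i \<and> x $ i \<le> (of_int (j $ i) + 1 + real N) * ?s"
    define v where "v = (\<chi> i. max (of_int (j $ i) * ?s) (min ((of_int (j $ i) + 1) * ?s) (x $ i)))"
    have "v \<in> cube e j" unfolding mem_cube v_def using s by (auto simp: algebra_simps)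
    moreover have "\<bar>x $ i - v $ i\<bar> \<le> real N * ?s" for i
      using h[rule_format, of i] s unfolding v_def by (auto simp: algebra_simps abs_le_iff max_def min_def)
    ultimately show "x \<in> thicken e N (cube e j)" unfolding thicken_def by auto
  qed
qed

lemma cube_sub_thicken: "e > 0 \<Longrightarrow> S \<subseteq> thicken e N S" for S :: "(real ^ 'n::finite) set"
  unfolding thicken_def using side_pos[of e, where 'n='n] by force

lemma cube_diam:
  fixes x y :: "real ^ 'n::finite"
  assumes "x \<in> cube e j" "y \<in> cube e j" "e > 0"
  shows "dist x y \<le> sqrt (real CARD('n)) * side_len e CARD('n)"
proof -
  let ?s = "side_len e CARD('n)"
  have s: "?s > 0" using side_pos[OF assms(3)] by simp
  have c: "\<bar>x $ i - y $ i\<bar> \<le> ?s" for i using assms(1,2) unfolding mem_cube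
    by (auto simp: abs_le_iff algebra_simps) (smt (verit))+
  have "dist x y = sqrt (\<Sum>i\<in>UNIV. (dist (x $ i) (y $ i))\<^sup>2)"
    unfolding dist_vec_def L2_set_def by simp
  also have "\<dots> \<le> sqrt (\<Sum>i\<in>(UNIV::'n set). ?s\<^sup>2)"
  proof (rule real_sqrt_le_mono, rule sum_mono)
    fix i
    show "(dist (x $ i) (y $ i))\<^sup>2 \<le> ?s\<^sup>2" using c[of i] s by (intro power_mono) (auto simp: dist_real_def)
  qed
  also have "\<dots> = sqrt (real CARD('n)) * ?s" using s by (simp add: real_sqrt_mult)
  finally show ?thesis .
qed

lemma finite_vecs:
  fixes F :: "'n::finite \<Rightarrow> int set"
  assumes "\<And>i. finite (F i)"
  shows "finite {j :: int ^ 'n. \<forall>i. j $ i \<in> F i}"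
proof -
  have "vec_nth ` {j :: int ^ 'n. \<forall>i. j $ i \<in> F i} \<subseteq> PiE UNIV F"
    by (auto simp: PiE_def extensional_def)
  moreover have "finite (PiE UNIV F)" using assms by (intro finite_PiE) auto
  ultimately have "finite (vec_nth ` {j :: int ^ 'n. \<forall>i. j $ i \<in> F i})" by (rule finite_subset)
  moreover have "inj_on vec_nth {j :: int ^ 'n. \<forall>i. j $ i \<in> F i}"
    by (intro inj_onI) (simp add: vec_eq_iff)
  ultimately show ?thesis using finite_imageD by blast
qed

lemma finite_cubes_at:
  fixes x :: "real ^ 'n::finite"
  assumes "e > 0"
  shows "finite {S \<in> Qcubes e. x \<in> S}"
proof -
  let ?s = "side_len e CARD('n)"
  have s: "?s > 0" using side_pos[OF assms] by simp
  let ?J = "{j :: int ^ 'n. \<forall>i. j $ i \<in> {\<lfloor>x $ i / ?s\<rfloor> - 1, \<lfloor>x $ i / ?s\<rfloor>}}"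
  have "{S \<in> Qcubes e. x \<in> S} \<subseteq> cube e ` ?J"
  proof
    fix S assume "S \<in> {S \<in> Qcubes e. x \<in> S}"
    then obtain j where S: "S = cube e j" "x \<in> cube e j" unfolding Qcubes_def by auto
    have "j $ i \<in> {\<lfloor>x $ i / ?s\<rfloor> - 1, \<lfloor>x $ i / ?s\<rfloor>}" for i
    proof -
      have l: "of_int (j $ i) * ?s \<le> x $ i" and u: "x $ i \<le> (of_int (j $ i) + 1) * ?s"
        using S(2) unfolding mem_cube by auto
      have "of_int (j $ i) \<le> x $ i / ?s" using l s by (simp add: pos_le_divide_eq)
      then have a: "j $ i \<le> \<lfloor>x $ i / ?s\<rfloor>" by (simp add: le_floor_iff)
      have "x $ i / ?s \<le> of_int (j $ i) + 1" using u s by (simp add: pos_divide_le_eq)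
      then have "\<lfloor>x $ i / ?s\<rfloor> \<le> j $ i + 1" by (simp add: floor_le_iff)
      then show ?thesis using a by auto
    qed
    then show "S \<in> cube e ` ?J" using S by auto
  qed
  moreover have "finite ?J" by (rule finite_vecs) auto
  ultimately show ?thesis using finite_subset by blast
qed

lemma finite_Icubes:
  fixes C :: "(real ^ 'n::finite) set"
  assumes "finite C" "e > 0"
  shows "finite (Icubes e C)"
proof -
  have "Icubes e C \<subseteq> (\<Union>x\<in>C. {S \<in> Qcubes e. x \<in> S})" unfolding Icubes_def by auto
  moreover have "finite (\<Union>x\<in>C. {S \<in> Qcubes e. x \<in> S})"
    using assms finite_cubes_at[OF assms(2)] by auto
  ultimately show ?thesis by (rule finite_subset)
qed



definition Uint :: "real \<Rightarrow> (real ^ 'n::finite) set \<Rightarrow> (real ^ 'n) set \<Rightarrow> (real ^ 'n) set" where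
  "Uint e Y C = \<Union> {S. interior_cube e Y C S}"

lemma interior_Icubes: "interior_cube e Y C S \<Longrightarrow> S \<in> Icubes e C"
  unfolding interior_cube_def by simp

lemma Icubes_Q: "S \<in> Icubes e C \<Longrightarrow> S \<in> Qcubes e"
  unfolding Icubes_def by simp

lemma bdry_mem: "S \<in> Icubes e C \<Longrightarrow> \<not> interior_cube e Y C S \<Longrightarrow> x \<in> S \<Longrightarrow> x \<in> bdry e Y C"
  unfolding bdry_def by blast

lemma bdry_E:
  assumes "x \<in> bdry e Y C"
  obtains T where "T \<in> Icubes e C" "\<not> interior_cube e Y C T" "x \<in> T"
  using assms unfolding bdry_def by blast

lemma closed_Uint:
  fixes C :: "(real ^ 'n::finite) set"
  assumes "finite C" "e > 0"
  shows "closed (Uint e Y C)"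
proof -
  have "{S. interior_cube e Y C S} \<subseteq> Icubes e C" using interior_Icubes by blast
  then have "finite {S. interior_cube e Y C S}" using finite_Icubes[OF assms] by (rule finite_subset)
  moreover have "closed S" if "S \<in> {S. interior_cube e Y C S}" for S
  proof -
    have "S \<in> Qcubes e" using that interior_Icubes Icubes_Q by blast
    then show ?thesis by (rule Q_E) (simp add: closed_cube)
  qed
  ultimately show ?thesis unfolding Uint_def by (intro closed_Union) auto
qed

lemma int_floor_bounds:
  fixes s wi :: real and m :: int
  assumes s: "s > 0"
    and lo: "(of_int m - 1) * s < wi" and hi: "wi < (of_int m + 2) * s"
  shows "m - 1 \<le> \<lfloor>wi / s\<rfloor> \<and> \<lfloor>wi / s\<rfloor> \<le> m + 1"
proof -
  let ?f = "\<lfloor>wi / s\<rfloor>"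
  have a: "of_int ?f \<le> wi / s" by (rule of_int_floor_le)
  have b: "wi / s < of_int ?f + 1" by (rule real_of_int_floor_add_one_gt)
  have c1: "of_int ?f * s \<le> wi" using iffD1[OF pos_le_divide_eq[OF s] a] .
  have c2: "wi < (of_int ?f + 1) * s" using iffD1[OF pos_divide_less_eq[OF s] b] .
  have "(of_int m - 1) * s < (of_int ?f + 1) * s" using lo c2 by linarith
  then have "of_int m - 1 < (of_int ?f + 1 :: real)" by (rule mult_right_less_imp_less) (use s in simp)
  then have "real_of_int (m - 2) < real_of_int ?f" by simp
  then have 1: "m - 2 < ?f" by (simp only: of_int_less_iff)
  have "of_int ?f * s < (of_int m + 2) * s" using hi c1 by linarith
  then have "of_int ?f < (of_int m + 2 :: real)" by (rule mult_right_less_imp_less) (use s in simp)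
  then have "real_of_int ?f < real_of_int (m + 2)" by simp
  then have 2: "?f < m + 2" by (simp only: of_int_less_iff)
  show ?thesis using 1 2 by linarith
qed

lemma ball_lemma:
  fixes x w :: "real ^ 'n::finite"
  assumes e: "e > 0" and W: "interior_cube e Y C W" and xW: "x \<in> W"
    and d: "dist x w < side_len e CARD('n)"
  shows "w \<in> Uint e Y C \<union> bdry e Y C"
proof -
  let ?s = "side_len e CARD('n)"
  have s: "?s > 0" using side_pos[OF e] by simp
  have "W \<in> Qcubes e" using W interior_Icubes Icubes_Q by blast
  then obtain m where Wm: "W = cube e m" by (rule Q_E)
  define T where "T = cube e (\<chi> i. \<lfloor>w $ i / ?s\<rfloor>)"
  have wT: "w \<in> T" unfolding T_def by (rule cube_at[OF e])
  have TQ: "T \<in> Qcubes e" unfolding T_def by (rule cube_in_Q)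
  have "T \<subseteq> thicken e 1 W"
  proof
    fix z assume zT: "z \<in> T"
    show "z \<in> thicken e 1 W" unfolding Wm mem_thicken_cube[OF e]
    proof
      fix i
      have ci: "\<bar>w $ i - x $ i\<bar> < ?s"
      proof -
        have "\<bar>(w - x) $ i\<bar> \<le> norm (w - x)" by (rule component_le_norm_cart)
        also have "\<dots> = dist x w" by (simp add: dist_norm norm_minus_commute)
        finally show ?thesis using d by simp
      qed
      have xi: "of_int (m $ i) * ?s \<le> x $ i" "x $ i \<le> (of_int (m $ i) + 1) * ?s"
        using xW unfolding Wm mem_cube by auto
      have lo: "(of_int (m $ i) - 1) * ?s < w $ i" using ci xi by (simp add: algebra_simps abs_less_iff)
      have hi: "w $ i < (of_int (m $ i) + 2) * ?s" using ci xi by (simp add: algebra_simps abs_less_iff)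
      have fb: "m $ i - 1 \<le> \<lfloor>w $ i / ?s\<rfloor> \<and> \<lfloor>w $ i / ?s\<rfloor> \<le> m $ i + 1"
        by (rule int_floor_bounds[OF s lo hi])
      have f1: "of_int (m $ i) - 1 \<le> (of_int \<lfloor>w $ i / ?s\<rfloor> :: real)"
        using fb by (metis of_int_1 of_int_diff of_int_le_iff)
      have f2: "(of_int \<lfloor>w $ i / ?s\<rfloor> :: real) \<le> of_int (m $ i) + 1"
        using fb by (metis of_int_1 of_int_add of_int_le_iff)
      have zi: "of_int \<lfloor>w $ i / ?s\<rfloor> * ?s \<le> z $ i" "z $ i \<le> (of_int \<lfloor>w $ i / ?s\<rfloor> + 1) * ?s"
        using zT unfolding T_def mem_cube by auto
      have g1: "(of_int (m $ i) - 1) * ?s \<le> of_int \<lfloor>w $ i / ?s\<rfloor> * ?s"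
        using f1 s by (intro mult_right_mono) auto
      have g2: "(of_int \<lfloor>w $ i / ?s\<rfloor> + 1) * ?s \<le> (of_int (m $ i) + 2) * ?s"
        using f2 s by (intro mult_right_mono) auto
      show "(of_int (m $ i) - real 1) * ?s \<le> z $ i \<and> z $ i \<le> (of_int (m $ i) + 1 + real 1) * ?s"
        using zi g1 g2 by (simp add: algebra_simps)
    qed
  qed
  then have TI: "T \<in> Icubes e C" using W TQ unfolding interior_cube_def by blast
  show ?thesis
  proof (cases "interior_cube e Y C T")
    case True then show ?thesis using wT unfolding Uint_def by blast
  next
    case False then show ?thesis using bdry_mem[OF TI False wT] by blast
  qed
qed

lemma seg_hits_bdry:
  fixes Y :: "(real ^ 'n::finite) set"
  assumes e: "e > 0" and fY: "finite Y" and C: "C \<in> Dstar k Y e" and p: "p \<in> C"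
    and z: "z \<in> Y" "z \<notin> C"
  shows "\<exists>t \<in> closed_segment p z. t \<in> bdry e Y C"
proof (rule ccontr)
  assume nb: "\<not> (\<exists>t \<in> closed_segment p z. t \<in> bdry e Y C)"
  let ?s = "side_len e CARD('n)"
  have s: "?s > 0" using side_pos[OF e] by simp
  let ?U = "Uint e Y C"
  let ?O = "\<Union>x\<in>?U. ball x ?s"
  have fC: "finite C" using finite_Dstar_elem[OF fY C] .
  have pseg: "p \<in> closed_segment p z" and zseg: "z \<in> closed_segment p z" by auto
  have pUB: "p \<in> ?U \<union> bdry e Y C"
  proof -
    define P where "P = cube e (\<chi> i. \<lfloor>p $ i / ?s\<rfloor>)"
    have pP: "p \<in> P" unfolding P_def by (rule cube_at[OF e])
    have PI: "P \<in> Icubes e C" unfolding Icubes_def P_def using pP p P_def cube_in_Q by blast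
    show ?thesis
    proof (cases "interior_cube e Y C P")
      case True then show ?thesis using pP unfolding Uint_def by blast
    next
      case False then show ?thesis using bdry_mem[OF PI False pP] by blast
    qed
  qed
  then have pU: "p \<in> ?U" using nb pseg by blast
  have zU: "z \<notin> ?U"
  proof
    assume "z \<in> ?U"
    then obtain S where S: "interior_cube e Y C S" "z \<in> S" unfolding Uint_def by blast
    then have "z \<in> thicken e 1 S" using cube_sub_thicken[OF e] by blast
    then have "z \<in> C" using S(1) z(1) unfolding interior_cube_def by blast
    then show False using z(2) by simp
  qed
  have zB: "z \<notin> bdry e Y C" using nb zseg by blast
  have ballsub: "ball x ?s \<subseteq> ?U \<union> bdry e Y C" if "x \<in> ?U" for x
  proof
    fix w assume "w \<in> ball x ?s"
    then have d: "dist x w < ?s" by simp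
    obtain W where "interior_cube e Y C W" "x \<in> W" using \<open>x \<in> ?U\<close> unfolding Uint_def by blast
    then show "w \<in> ?U \<union> bdry e Y C" using ball_lemma[OF e _ _ d] by blast
  qed
  have zO: "z \<notin> ?O"
  proof
    assume "z \<in> ?O"
    then obtain x where xU: "x \<in> ?U" and zb: "z \<in> ball x ?s" by (rule UN_E)
    have "z \<in> ?U \<union> bdry e Y C" using ballsub[OF xU] zb by (rule subsetD)
    then show False using zU zB by simp
  qed
  have cU: "closed ?U" by (rule closed_Uint[OF fC e])
  have cO: "closed (- ?O)" by (intro closed_Compl open_UN) auto
  have conn: "connected (closed_segment p z)" by (rule connected_segment)
  have "closed ?U \<and> closed (- ?O) \<and> closed_segment p z \<subseteq> ?U \<union> - ?O \<and>
        ?U \<inter> - ?O \<inter> closed_segment p z = {} \<and> ?U \<inter> closed_segment p z \<noteq> {} \<and>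
        - ?O \<inter> closed_segment p z \<noteq> {}"
  proof (intro conjI)
    show "closed ?U" by (rule cU)
    show "closed (- ?O)" by (rule cO)
    show "closed_segment p z \<subseteq> ?U \<union> - ?O"
    proof
      fix w assume wseg: "w \<in> closed_segment p z"
      show "w \<in> ?U \<union> - ?O"
      proof (rule ccontr)
        assume "w \<notin> ?U \<union> - ?O"
        then have wO: "w \<in> ?O" and wU: "w \<notin> ?U" by simp_all
        from wO obtain x where xU: "x \<in> ?U" and wb: "w \<in> ball x ?s" by (rule UN_E)
        have "w \<in> ?U \<union> bdry e Y C" using ballsub[OF xU] wb by (rule subsetD)
        then have "w \<in> bdry e Y C" using wU by simp
        then show False using nb wseg by blast
      qed
    qed
    show "?U \<inter> - ?O \<inter> closed_segment p z = {}"
    proof -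
      have xO: "x \<in> ?O" if "x \<in> ?U" for x using that s by (intro UN_I[of x]) auto
      show ?thesis
      proof (rule equals0I)
        fix x assume "x \<in> ?U \<inter> - ?O \<inter> closed_segment p z"
        then have xa: "x \<in> ?U" and xb: "x \<notin> ?O" by simp_all
        show False using xb xO[OF xa] by (rule notE)
      qed
    qed
    show "?U \<inter> closed_segment p z \<noteq> {}" using pU pseg by (simp add: disjoint_iff) blast
    show "- ?O \<inter> closed_segment p z \<noteq> {}" using zO zseg by (simp add: disjoint_iff) blast
  qed
  then have "\<exists>A B. closed A \<and> closed B \<and> closed_segment p z \<subseteq> A \<union> B \<and>
        A \<inter> B \<inter> closed_segment p z = {} \<and> A \<inter> closed_segment p z \<noteq> {} \<and>
        B \<inter> closed_segment p z \<noteq> {}" by (intro exI)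
  then have "\<not> connected (closed_segment p z)" unfolding connected_closed not_not .
  then show False using conn by contradiction
qed



lemma comp_le_dist: "\<bar>w $ i - t $ i\<bar> \<le> dist w t" for w t :: "real ^ 'n::finite"
proof -
  have "\<bar>(w - t) $ i\<bar> \<le> norm (w - t)" by (rule component_le_norm_cart)
  then show ?thesis by (simp add: dist_norm)
qed

lemma thick_arith:
  fixes J s N w t :: real
  assumes s: "s > 0" and N: "N \<ge> 0" and c: "\<bar>w - t\<bar> \<le> (N + 1) * s" and t1: "J * s \<le> t" and t2: "t \<le> (J + 1) * s"
  shows "w < J * s \<Longrightarrow> (J - 1 - N) * s \<le> w \<and> w \<le> (J - 1 + 1 + N) * s"
    and "w > (J + 1) * s \<Longrightarrow> (J + 1 - N) * s \<le> w \<and> w \<le> (J + 1 + 1 + N) * s"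
    and "\<not> w < J * s \<Longrightarrow> \<not> w > (J + 1) * s \<Longrightarrow> (J - N) * s \<le> w \<and> w \<le> (J + 1 + N) * s"
proof -
  have Ns: "N * s \<ge> 0" using s N by simp
  have c1: "w - t \<le> N * s + s" "t - w \<le> N * s + s" using c by (auto simp: abs_le_iff algebra_simps)
  have ex: "(J - 1 - N) * s = J * s - s - N * s" "(J - 1 + 1 + N) * s = J * s + N * s"
    "(J + 1 - N) * s = J * s + s - N * s" "(J + 1 + 1 + N) * s = J * s + s + s + N * s"
    "(J - N) * s = J * s - N * s" "(J + 1 + N) * s = J * s + s + N * s" "(J + 1) * s = J * s + s"
    by (simp_all add: algebra_simps)
  show "w < J * s \<Longrightarrow> (J - 1 - N) * s \<le> w \<and> w \<le> (J - 1 + 1 + N) * s"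
    using Ns c1 t1 t2 unfolding ex by linarith
  show "w > (J + 1) * s \<Longrightarrow> (J + 1 - N) * s \<le> w \<and> w \<le> (J + 1 + 1 + N) * s"
    using Ns c1 t1 t2 unfolding ex by linarith
  show "\<not> w < J * s \<Longrightarrow> \<not> w > (J + 1) * s \<Longrightarrow> (J - N) * s \<le> w \<and> w \<le> (J + 1 + N) * s"
    using Ns c1 t1 t2 unfolding ex by linarith
qed

lemma far_from_bdry:
  fixes w t :: "real ^ 'n::finite"
  assumes e: "e > 0" and wn: "w \<notin> nbhd e N (bdry e Y C)"
    and TI: "T \<in> Icubes e C" and Tn: "\<not> interior_cube e Y C T" and tT: "t \<in> T"
  shows "dist w t > (real N + 1) * side_len e CARD('n)"
proof (rule ccontr)
  let ?s = "side_len e CARD('n)"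
  have s: "?s > 0" using side_pos[OF e] by simp
  assume "\<not> dist w t > (real N + 1) * ?s"
  then have dwt: "dist w t \<le> (real N + 1) * ?s" by simp
  obtain j where Tj: "T = cube e j" using Icubes_Q[OF TI] by (rule Q_E)
  have comp: "\<bar>w $ i - t $ i\<bar> \<le> (real N + 1) * ?s" for i
    using comp_le_dist[of w i t] dwt by linarith
  have ti: "of_int (j $ i) * ?s \<le> t $ i" "t $ i \<le> (of_int (j $ i) + 1) * ?s" for i
    using tT unfolding Tj mem_cube by auto
  define j' where "j' = (\<chi> i. if w $ i < of_int (j $ i) * ?s then j $ i - 1
                      else if w $ i > (of_int (j $ i) + 1) * ?s then j $ i + 1 else j $ i)"
  define v where "v = (\<chi> i. max (of_int (j $ i) * ?s) (min ((of_int (j $ i) + 1) * ?s) (w $ i)))"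
  have vT: "v \<in> T" unfolding Tj mem_cube v_def using s by (auto simp: algebra_simps)
  have vS: "v \<in> cube e j'"
    unfolding mem_cube
  proof
    fix i
    show "of_int (j' $ i) * ?s \<le> v $ i \<and> v $ i \<le> (of_int (j' $ i) + 1) * ?s"
    proof (cases "w $ i < of_int (j $ i) * ?s")
      case True
      then have jj: "j' $ i = j $ i - 1" and vv: "v $ i = of_int (j $ i) * ?s" unfolding j'_def v_def using s
        by (auto simp: algebra_simps max_def min_def)
      have jr: "real_of_int (j' $ i) = real_of_int (j $ i) - 1" using jj by simp
      show ?thesis unfolding jr vv using s by (simp add: algebra_simps)
    next
      case False
      show ?thesis
      proof (cases "w $ i > (of_int (j $ i) + 1) * ?s")
        case True
        then have jj: "j' $ i = j $ i + 1" and vv: "v $ i = (of_int (j $ i) + 1) * ?s" unfolding j'_def v_def using s False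
          by (auto simp: algebra_simps max_def min_def)
        have jr: "real_of_int (j' $ i) = real_of_int (j $ i) + 1" using jj by simp
        show ?thesis unfolding jr vv using s by (simp add: algebra_simps)
      next
        case False2: False
        then have "j' $ i = j $ i" "v $ i = w $ i" unfolding j'_def v_def using s False
          by (auto simp: algebra_simps max_def min_def)
        then show ?thesis using False False2 by simp
      qed
    qed
  qed
  have vB: "v \<in> bdry e Y C" by (rule bdry_mem[OF TI Tn vT])
  have SI: "cube e j' \<in> Icubes e (bdry e Y C)" unfolding Icubes_def using vB vS cube_in_Q by blast
  have wS: "w \<in> thicken e N (cube e j')"
    unfolding mem_thicken_cube[OF e]
  proof
    fix i
    have c: "\<bar>w $ i - t $ i\<bar> \<le> (real N + 1) * ?s" by (rule comp)
    have Ns: "real N * ?s \<ge> 0" using s by simp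
    show "(of_int (j' $ i) - real N) * ?s \<le> w $ i \<and> w $ i \<le> (of_int (j' $ i) + 1 + real N) * ?s"
    proof (cases "w $ i < of_int (j $ i) * ?s")
      case True
      then have "j' $ i = j $ i - 1" unfolding j'_def by simp
      then have jr: "real_of_int (j' $ i) = real_of_int (j $ i) - 1" by simp
      show ?thesis unfolding jr using thick_arith(1)[OF s _ c ti(1)[of i] ti(2)[of i] True] by simp
    next
      case False
      show ?thesis
      proof (cases "w $ i > (of_int (j $ i) + 1) * ?s")
        case True
        then have "j' $ i = j $ i + 1" unfolding j'_def using False by simp
        then have jr: "real_of_int (j' $ i) = real_of_int (j $ i) + 1" by simp
        show ?thesis unfolding jr using thick_arith(2)[OF s _ c ti(1)[of i] ti(2)[of i] True] by simp
      next
        case False2: False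
        then have "j' $ i = j $ i" unfolding j'_def using False by simp
        then show ?thesis using thick_arith(3)[OF s _ c ti(1)[of i] ti(2)[of i] False False2] by simp
      qed
    qed
  qed
  have "w \<in> nbhd e N (bdry e Y C)" unfolding nbhd_def using SI wS by blast
  then show False using wn by contradiction
qed

definition good :: "nat \<Rightarrow> (real ^ 'n::finite) set \<Rightarrow> real \<Rightarrow> (real ^ 'n) set \<Rightarrow> real ^ 'n \<Rightarrow> bool" where
  "good k Y e C b \<longleftrightarrow> b \<in> C \<and> (\<forall>y\<in>Y. dist b y \<le> e \<longrightarrow> y \<in> Ffilter k Y e)"

lemma boundary_good:
  fixes Y :: "(real ^ 'n::finite) set"
  assumes e: "e > 0" and fY: "finite Y" and C: "C \<in> Dstar k Y e"
    and TI: "T \<in> Icubes e C" and Tn: "\<not> interior_cube e Y C T" and bT: "b \<in> T" and bC: "b \<in> C"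
  shows "good k Y e C b"
  unfolding good_def
proof (intro conjI ballI impI)
  show "b \<in> C" by (rule bC)
  fix w assume wY: "w \<in> Y" and d: "dist b w \<le> e"
  let ?s = "side_len e CARD('n)"
  have s: "?s > 0" using side_pos[OF e] by simp
  show "w \<in> Ffilter k Y e"
  proof (cases "w \<in> core_pts k Y e")
    case True
    have wC: "w \<in> C" by (rule Dstar_closed[OF C bC True d])
    have bB: "b \<in> bdry e Y C" by (rule bdry_mem[OF TI Tn bT])
    have TB: "T \<in> Icubes e (bdry e Y C)" unfolding Icubes_def using Icubes_Q[OF TI] bT bB by blast
    have eN: "e \<le> real (frakN CARD('n)) * ?s"
    proof -
      have "e = 2 * sqrt (real CARD('n)) * ?s" by (rule e_eq_side)
      also have "\<dots> \<le> real (frakN CARD('n)) * ?s" using frakN_ge1 s by (intro mult_right_mono) auto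
      finally show ?thesis .
    qed
    have "\<bar>w $ i - b $ i\<bar> \<le> real (frakN CARD('n)) * ?s" for i
      using comp_le_dist[of w i b] d eN by (simp add: dist_commute)
    then have "w \<in> thicken e (frakN CARD('n)) T" unfolding thicken_def using bT by blast
    then have "w \<in> nbhd e (frakN CARD('n)) (bdry e Y C)" unfolding nbhd_def using TB by blast
    then show ?thesis by (rule kept_nbhd[OF C wC])
  next
    case False then show ?thesis by (rule noise_kept[OF wY])
  qed
qed

lemma Gcore:
  fixes Y :: "(real ^ 'n::finite) set"
  assumes e: "e > 0" and fY: "finite Y" and C: "C \<in> Dstar k Y e"
    and wC: "w \<in> C" and wn: "w \<notin> nbhd e (frakN CARD('n)) (bdry e Y C)"
    and pC: "p \<in> C" and zY: "z \<in> Y" and zC: "z \<notin> C"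
  shows "\<exists>b. good k Y e C b \<and> dist z b + e < dist z p + dist p w"
proof -
  let ?s = "side_len e CARD('n)"
  let ?n = "real CARD('n)"
  have s: "?s > 0" using side_pos[OF e] by simp
  obtain t where tseg: "t \<in> closed_segment p z" and tB: "t \<in> bdry e Y C"
    using seg_hits_bdry[OF e fY C pC zY zC] by blast
  obtain T where TI: "T \<in> Icubes e C" and Tn: "\<not> interior_cube e Y C T" and tT: "t \<in> T"
    using tB by (rule bdry_E)
  obtain b where bT: "b \<in> T" and bC: "b \<in> C" using TI unfolding Icubes_def by blast
  have g: "good k Y e C b" by (rule boundary_good[OF e fY C TI Tn bT bC])
  have far: "dist w t > (real (frakN CARD('n)) + 1) * ?s" by (rule far_from_bdry[OF e wn TI Tn tT])
  obtain j where Tj: "T = cube e j" using Icubes_Q[OF TI] by (rule Q_E)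
  have diam: "dist t b \<le> sqrt ?n * ?s" using cube_diam[of t e j b] tT bT e Tj by simp
  have seg: "dist p z = dist p t + dist t z"
    using tseg by (simp add: between_mem_segment[symmetric] between)
  have t1: "dist z b \<le> dist z t + dist t b" by (rule dist_triangle)
  have t2: "dist w t \<le> dist w p + dist p t" by (rule dist_triangle)
  have k3: "3 * sqrt ?n * ?s \<le> (real (frakN CARD('n)) + 1) * ?s"
    using frakN_ge2[of "CARD('n)"] s by (intro mult_right_mono) auto
  have ee: "e = 2 * sqrt ?n * ?s" by (rule e_eq_side)
  have "dist z b + e < dist z p + dist p w"
    using seg t1 t2 far diam k3 ee by (simp add: dist_commute algebra_simps)
  then show ?thesis using g by blast
qed

lemma good_core:
  fixes Y :: "(real ^ 'n::finite) set"
  assumes fY: "finite Y" and e: "e > 0" and C: "C \<in> Dstar k Y e" and g: "good k Y e C b"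
  shows "b \<in> Ffilter k Y e" "k \<le> cnt (Ffilter k Y e) b e"
proof -
  have bC: "b \<in> C" and gg: "\<And>y. y \<in> Y \<Longrightarrow> dist b y \<le> e \<Longrightarrow> y \<in> Ffilter k Y e"
    using g unfolding good_def by auto
  have bK: "b \<in> core_pts k Y e" using Dstar_core[OF C] bC by blast
  then have bY: "b \<in> Y" and kb: "k \<le> cnt Y b e" using core_pts_iff[OF fY] e by auto
  show "b \<in> Ffilter k Y e" using gg[OF bY] e by simp
  have fF: "finite (Ffilter k Y e)" using Ffilter_sub fY by (rule finite_subset)
  have "{z \<in> Y - {b}. dist b z \<le> e} \<subseteq> {z \<in> Ffilter k Y e - {b}. dist b z \<le> e}" using gg by auto
  then have "cnt Y b e \<le> cnt (Ffilter k Y e) b e" unfolding cnt_def using fF by (intro card_mono) auto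
  then show "k \<le> cnt (Ffilter k Y e) b e" using kb by simp
qed



lemma G_good:
  fixes Y :: "(real ^ 'n::finite) set"
  assumes e: "e > 0" and fY: "finite Y" and C: "C \<in> Dstar k Y e"
    and pC: "p \<in> C" and zY: "z \<in> Y" and zC: "z \<notin> C"
  shows "\<exists>b. good k Y e C b \<and> dist z b \<le> dist z p"
proof (cases "good k Y e C p")
  case True then show ?thesis by auto
next
  case False
  then obtain w where wY: "w \<in> Y" and dw: "dist p w \<le> e" and wn: "w \<notin> Ffilter k Y e"
    using pC unfolding good_def by auto
  have wK: "w \<in> core_pts k Y e" by (rule removed_core[OF wY wn])
  have wC: "w \<in> C" by (rule Dstar_closed[OF C pC wK dw])
  have wnb: "w \<notin> nbhd e (frakN CARD('n)) (bdry e Y C)"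
    using kept_nbhd[OF C wC] wn by blast
  obtain b where "good k Y e C b" "dist z b + e < dist z p + dist p w"
    using Gcore[OF e fY C wC wnb pC zY zC] by blast
  then show ?thesis using dw by (intro exI[of _ b]) auto
qed

lemma G_removed:
  fixes Y :: "(real ^ 'n::finite) set"
  assumes e: "e > 0" and fY: "finite Y" and C: "C \<in> Dstar k Y e"
    and wC: "w \<in> C" and wn: "w \<notin> Ffilter k Y e" and zY: "z \<in> Y" and zC: "z \<notin> C"
  shows "\<exists>b. good k Y e C b \<and> dist z b + e < dist z w"
proof -
  have wnb: "w \<notin> nbhd e (frakN CARD('n)) (bdry e Y C)"
    using kept_nbhd[OF C wC] wn by blast
  show ?thesis using Gcore[OF e fY C wC wnb wC zY zC] by simp
qed

lemma noisecore:
  fixes Y :: "(real ^ 'n::finite) set"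
  assumes e: "e > 0" and fY: "finite Y" and qY: "q \<in> Y" and qn: "q \<notin> core_pts k Y e"
    and kq: "k \<le> cnt Y q a"
  shows "k \<le> cnt (Ffilter k Y e) q a"
proof -
  have fF: "finite (Ffilter k Y e)" using Ffilter_sub fY by (rule finite_subset)
  show ?thesis
  proof (cases "\<forall>y\<in>Y - {q}. dist q y \<le> a \<longrightarrow> y \<in> Ffilter k Y e")
    case True
    then have "{z \<in> Y - {q}. dist q z \<le> a} \<subseteq> {z \<in> Ffilter k Y e - {q}. dist q z \<le> a}" by auto
    then have "cnt Y q a \<le> cnt (Ffilter k Y e) q a" unfolding cnt_def using fF by (intro card_mono) auto
    then show ?thesis using kq by simp
  next
    case False
    then obtain y where yY: "y \<in> Y" and yq: "y \<noteq> q" and dy: "dist q y \<le> a" and yn: "y \<notin> Ffilter k Y e"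
      by auto
    have yK: "y \<in> core_pts k Y e" by (rule removed_core[OF yY yn])
    let ?C = "cl k Y e y"
    have C: "?C \<in> Dstar k Y e" by (rule cl_in_Dstar[OF yK])
    have yC: "y \<in> ?C" using yK by simp
    have qC: "q \<notin> ?C" using qn by simp
    obtain b where g: "good k Y e ?C b" and db: "dist q b + e < dist q y"
      using G_removed[OF e fY C yC yn qY qC] by blast
    have bC: "b \<in> ?C" and gg: "\<And>w. w \<in> Y \<Longrightarrow> dist b w \<le> e \<Longrightarrow> w \<in> Ffilter k Y e"
      using g unfolding good_def by auto
    have bK: "b \<in> core_pts k Y e" using bC by simp
    let ?A = "{w \<in> Y. dist b w \<le> e}"
    have fA: "finite ?A" using fY by simp
    have cA: "card ?A > k" by (rule core_card[OF bK])
    have "?A - {q} \<subseteq> {z \<in> Ffilter k Y e - {q}. dist q z \<le> a}"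
    proof
      fix w assume w: "w \<in> ?A - {q}"
      have "dist q w \<le> dist q b + dist b w" by (rule dist_triangle)
      then have "dist q w \<le> a" using w db dy by auto
      then show "w \<in> {z \<in> Ffilter k Y e - {q}. dist q z \<le> a}" using w gg by auto
    qed
    then have "card (?A - {q}) \<le> cnt (Ffilter k Y e) q a" unfolding cnt_def using fF by (intro card_mono) auto
    moreover have "card ?A \<le> card (?A - {q}) + 1"
    proof (cases "q \<in> ?A")
      case True
      then have "card (?A - {q}) = card ?A - 1" by (rule card_Diff_singleton)
      moreover have "card ?A > 0" using True fA card_gt_0_iff by blast
      ultimately show ?thesis by linarith
    next
      case False then show ?thesis by simp
    qed
    ultimately show ?thesis using cA by linarith
  qed
qed

section \<open>Edges of H\<close>

lemma Hedge:
  fixes X :: "(real ^ 'n::finite) set"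
  assumes fX: "finite X" and C: "C \<in> Dstar k (Xs k eps X m) (eps (Suc m))"
    and uC: "u \<in> C" and vC: "v \<in> C" and uv: "u \<noteq> v"
    and a0: "0 \<le> a" and ae: "a \<le> eps (Suc m)"
    and ku: "k \<le> cnt (Xs k eps X m) u a" and kv: "k \<le> cnt (Xs k eps X m) v a"
    and d: "dist u v \<le> a"
  shows "snd (Hgraph k eps X (Suc m)) u v \<le> ereal a"
proof -
  let ?Y = "Xs k eps X m"
  let ?e = "eps (Suc m)"
  let ?B = "Bset ?Y ?e C"
  have fY: "finite ?Y" using Xs_sub fX by (rule finite_subset)
  have fB: "finite ?B" using Bset_sub fY by (rule finite_subset)
  have CY: "C \<subseteq> ?Y" by (rule Dstar_sub[OF C])
  have e0: "0 \<le> ?e" using a0 ae by simp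
  have inB: "w \<in> ?B" if "w \<in> C" for w
    using that CY e0 unfolding Bset_def by auto
  have cntB: "cnt ?Y w a \<le> cnt ?B w a" if "w \<in> C" for w
  proof -
    have "{z \<in> ?Y - {w}. dist w z \<le> a} \<subseteq> {z \<in> ?B - {w}. dist w z \<le> a}"
    proof
      fix z assume z: "z \<in> {z \<in> ?Y - {w}. dist w z \<le> a}"
      have "infdist z C \<le> dist z w" by (rule infdist_le[OF that])
      then have "infdist z C \<le> ?e" using z ae by (simp add: dist_commute)
      then show "z \<in> {z \<in> ?B - {w}. dist w z \<le> a}" using z unfolding Bset_def by auto
    qed
    then show ?thesis unfolding cnt_def using fB by (intro card_mono) auto
  qed
  have cu: "core_dist k ?B u \<le> ereal a" using core_dist_le_iff[OF fB a0] ku cntB[OF uC] by simp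
  have cv: "core_dist k ?B v \<le> ereal a" using core_dist_le_iff[OF fB a0] kv cntB[OF vC] by simp
  have r: "rho k ?B u v \<le> ereal a" unfolding rho_def using cu cv d uv by simp
  let ?G = "trunc_graph (complete_graph ?B (rho k ?B)) ?e"
  have Gw: "snd ?G u v = rho k ?B u v"
    unfolding snd_trunc snd_complete using inB[OF uC] inB[OF vC] uv r ae
    by (auto intro: order_trans)
  let ?S = "{trunc_graph
             (complete_graph (Bset (Xs k eps X m) (eps (Suc m)) C)
                             (rho k (Bset (Xs k eps X m) (eps (Suc m)) C)))
             (eps (Suc m)) | C. C \<in> Dstar k (Xs k eps X m) (eps (Suc m))}"
  have GS: "?G \<in> ?S" using C by blast
  have "snd (graph_Union ?S) u v \<le> snd ?G u v" unfolding snd_Union by (rule INF_lower[OF GS])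
  then have "snd (Hgraph k eps X (Suc m)) u v \<le> snd ?G u v" by (simp add: snd_union min.coboundedI1)
  then show ?thesis using Gw r by simp
qed

lemma cluster_conn:
  fixes X :: "(real ^ 'n::finite) set"
  assumes fX: "finite X" and e: "eps (Suc m) > 0" and C: "C \<in> Dstar k (Xs k eps X m) (eps (Suc m))"
    and xC: "x \<in> C" and yC: "y \<in> C"
  shows "same_comp (Hgraph k eps X (Suc m)) (eps (Suc m)) x y"
proof -
  let ?Y = "Xs k eps X m"
  let ?e = "eps (Suc m)"
  let ?R = "core_graph_rel k ?Y ?e"
  have fY: "finite ?Y" using Xs_sub fX by (rule finite_subset)
  have CX: "C \<subseteq> X" using Dstar_sub[OF C] Xs_sub by blast
  have "(x, y) \<in> ?R\<^sup>*" by (rule Dstar_pair[OF C xC yC])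
  then show ?thesis
  proof (induction rule: rtrancl_induct)
    case base then show ?case using xC CX by (intro same_comp_refl) (auto simp: fst_Hgraph)
  next
    case (step u v)
    have uC: "u \<in> C" by (rule Dstar_reach[OF C xC step(1)])
    have vC: "v \<in> C" using Dstar_reach[OF C xC] step(1,2) by (meson rtrancl.rtrancl_into_rtrancl)
    have uv: "u \<noteq> v" "dist u v \<le> ?e" using step(2) unfolding core_graph_rel_def by auto
    have ku: "k \<le> cnt ?Y u ?e" using Dstar_core[OF C] uC core_pts_iff[OF fY] e by auto
    have kv: "k \<le> cnt ?Y v ?e" using Dstar_core[OF C] vC core_pts_iff[OF fY] e by auto
    have "snd (Hgraph k eps X (Suc m)) u v \<le> ereal ?e"
      by (rule Hedge[OF fX C uC vC uv(1) _ _ ku kv uv(2)]) (use e in auto)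
    then have "same_comp (Hgraph k eps X (Suc m)) ?e u v"
      using uC vC CX uv(1) by (intro same_comp_edge) (auto simp: fst_Hgraph)
    then show ?case by (rule same_comp_trans[OF step(3)])
  qed
qed

lemma H_mono_step: "snd (Hgraph k eps X (Suc m)) x y \<le> snd (Hgraph k eps X m) x y"
  by (simp add: snd_union)

lemma H_mono: "j \<le> m \<Longrightarrow> snd (Hgraph k eps X m) x y \<le> snd (Hgraph k eps X j) x y"
proof (induction m)
  case 0 then show ?case by simp
next
  case (Suc m)
  show ?case
  proof (cases "j = Suc m")
    case True then show ?thesis by simp
  next
    case False
    then have "j \<le> m" using Suc.prems by simp
    then show ?thesis using Suc.IH H_mono_step order_trans by metis
  qed
qed

lemma F_le_H: "snd (Fgraph k eps X m) x y \<le> snd (Hgraph k eps X m) x y"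
  unfolding Fgraph_def by (simp add: snd_union)

lemma F_le_G: "snd (Fgraph k eps X m) x y \<le> snd (complete_graph (Xs k eps X m) (rho k (Xs k eps X m))) x y"
  unfolding Fgraph_def by (simp add: snd_union)



lemma rho_le_parts:
  assumes "rho k Z u v \<le> ereal a" "u \<noteq> v"
  shows "core_dist k Z u \<le> ereal a" "core_dist k Z v \<le> ereal a" "dist u v \<le> a"
  using assms unfolding rho_def by auto

lemma OS:
  fixes X :: "(real ^ 'n::finite) set"
  assumes fX: "finite X" and e: "eps (Suc m) > 0" and ea: "eps (Suc m) \<le> a"
    and xY: "x \<in> Xs k eps X m" and yY: "y \<in> Xs k eps X m" and xy: "x \<noteq> y"
    and r: "rho k (Xs k eps X m) x y \<le> ereal a"
  shows "same_comp (Fgraph k eps X (Suc m)) a x y"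
proof -
  let ?Y = "Xs k eps X m"
  let ?e = "eps (Suc m)"
  let ?Y' = "Xs k eps X (Suc m)"
  let ?F = "Fgraph k eps X (Suc m)"
  have Y': "?Y' = Ffilter k ?Y ?e" by simp
  have fY: "finite ?Y" using Xs_sub fX by (rule finite_subset)
  have fY': "finite ?Y'" using Xs_sub fX by (rule finite_subset)
  have a0: "0 \<le> a" using e ea by simp
  have YX: "?Y \<subseteq> X" by (rule Xs_sub)
  have Y'X: "?Y' \<subseteq> X" by (rule Xs_sub)
  have fstF: "fst ?F = X" by (rule fst_Fgraph)
  have edgeF: "same_comp ?F a u v"
    if "u \<in> ?Y'" "v \<in> ?Y'" "u \<noteq> v" "k \<le> cnt ?Y' u a" "k \<le> cnt ?Y' v a" "dist u v \<le> a" for u v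
  proof -
    have "core_dist k ?Y' u \<le> ereal a" using core_dist_le_iff[OF fY' a0] that by simp
    moreover have "core_dist k ?Y' v \<le> ereal a" using core_dist_le_iff[OF fY' a0] that by simp
    ultimately have "rho k ?Y' u v \<le> ereal a" unfolding rho_def using that by simp
    then have "snd ?F u v \<le> ereal a" using F_le_G[of k eps X "Suc m" u v] that
      by (auto simp: snd_complete intro: order_trans)
    then show ?thesis using that Y'X fstF by (intro same_comp_edge) auto
  qed
  have clusterF: "same_comp ?F a u v" if "C \<in> Dstar k ?Y ?e" "u \<in> C" "v \<in> C" for C u v
  proof -
    have h: "same_comp (Hgraph k eps X (Suc m)) ?e u v" by (rule cluster_conn[OF fX e that])
    show ?thesis
    proof (rule same_comp_mono[OF _ _ ea h])
      show "fst (Hgraph k eps X (Suc m)) \<subseteq> fst ?F" by (simp only: fst_Hgraph fst_Fgraph order_refl)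
      fix x y show "snd ?F x y \<le> snd (Hgraph k eps X (Suc m)) x y" by (rule F_le_H)
    qed
  qed
  have goodF: "b \<in> ?Y' \<and> k \<le> cnt ?Y' b a" if "C \<in> Dstar k ?Y ?e" "good k ?Y ?e C b" for C b
  proof -
    have "b \<in> ?Y'" "k \<le> cnt ?Y' b ?e" using good_core[OF fY e that] by simp_all
    moreover have "cnt ?Y' b ?e \<le> cnt ?Y' b a" by (rule cnt_mono_a[OF fY' ea])
    ultimately show ?thesis by simp
  qed
  have noiseF: "q \<in> ?Y' \<and> k \<le> cnt ?Y' q a" if "q \<in> ?Y" "q \<notin> core_pts k ?Y ?e" "k \<le> cnt ?Y q a" for q
    using noise_kept[OF that(1,2)] noisecore[OF e fY that] by simp
  have coreC: "u \<in> core_pts k ?Y ?e" if "C \<in> Dstar k ?Y ?e" "u \<in> C" for C u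
    using Dstar_core that by blast
  have main: "same_comp ?F a u v"
    if uY: "u \<in> ?Y" and vY: "v \<in> ?Y" and uv: "u \<noteq> v" and duv: "dist u v \<le> a"
      and ku: "k \<le> cnt ?Y u a" and kv: "k \<le> cnt ?Y v a"
      and cs: "u \<in> core_pts k ?Y ?e \<or> (u \<notin> core_pts k ?Y ?e \<and> v \<notin> core_pts k ?Y ?e)" for u v
  proof (cases "u \<in> core_pts k ?Y ?e")
    case uK: True
    let ?C = "cl k ?Y ?e u"
    have C: "?C \<in> Dstar k ?Y ?e" by (rule cl_in_Dstar[OF uK])
    have uC: "u \<in> ?C" using uK by simp
    show ?thesis
    proof (cases "v \<in> ?C")
      case True then show ?thesis using clusterF[OF C uC] by simp
    next
      case vC: False
      obtain b where gb: "good k ?Y ?e ?C b" and db: "dist v b \<le> dist v u"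
        using G_good[OF e fY C uC vY vC] by blast
      have bC: "b \<in> ?C" using gb unfolding good_def by simp
      have bK: "b \<in> core_pts k ?Y ?e" using bC by simp
      have bY: "b \<in> ?Y" using bK core_pts_sub by blast
      have ub: "same_comp ?F a u b" by (rule clusterF[OF C uC bC])
      have gbF: "b \<in> ?Y' \<and> k \<le> cnt ?Y' b a" by (rule goodF[OF C gb])
      have dbv: "dist b v \<le> a" using db duv by (simp add: dist_commute)
      show ?thesis
      proof (cases "v \<in> core_pts k ?Y ?e")
        case vK: True
        let ?C' = "cl k ?Y ?e v"
        have C': "?C' \<in> Dstar k ?Y ?e" by (rule cl_in_Dstar[OF vK])
        have vC': "v \<in> ?C'" using vK by simp
        have bC': "b \<notin> ?C'"
        proof
          assume "b \<in> ?C'"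
          then have "?C = ?C'" using Dstar_eq[OF C C' bC] by simp
          then show False using vC vC' by simp
        qed
        obtain b' where gb': "good k ?Y ?e ?C' b'" and db': "dist b b' \<le> dist b v"
          using G_good[OF e fY C' vC' bY bC'] by blast
        have b'C': "b' \<in> ?C'" using gb' unfolding good_def by simp
        have gbF': "b' \<in> ?Y' \<and> k \<le> cnt ?Y' b' a" by (rule goodF[OF C' gb'])
        have bb': "b \<noteq> b'" using bC' b'C' by blast
        have e1: "same_comp ?F a b b'"
          using gbF gbF' bb' db' dbv by (intro edgeF) auto
        have e2: "same_comp ?F a b' v" by (rule clusterF[OF C' b'C' vC'])
        show ?thesis using ub e1 e2 same_comp_trans by metis
      next
        case vK: False
        have nv: "v \<in> ?Y' \<and> k \<le> cnt ?Y' v a" by (rule noiseF[OF vY vK kv])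
        have bv: "b \<noteq> v" using bK vK by blast
        have "same_comp ?F a b v" using gbF nv bv dbv by (intro edgeF) auto
        then show ?thesis using ub same_comp_trans by metis
      qed
    qed
  next
    case False
    then have uK: "u \<notin> core_pts k ?Y ?e" and vK: "v \<notin> core_pts k ?Y ?e" using cs by auto
    have nu: "u \<in> ?Y' \<and> k \<le> cnt ?Y' u a" by (rule noiseF[OF uY uK ku])
    have nv: "v \<in> ?Y' \<and> k \<le> cnt ?Y' v a" by (rule noiseF[OF vY vK kv])
    show ?thesis using nu nv uv duv by (intro edgeF) auto
  qed
  have kx: "k \<le> cnt ?Y x a" and ky: "k \<le> cnt ?Y y a" and dxy: "dist x y \<le> a"
    using rho_le_parts[OF r xy] core_dist_le_iff[OF fY a0] by auto
  show ?thesis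
  proof (cases "x \<in> core_pts k ?Y ?e \<or> (x \<notin> core_pts k ?Y ?e \<and> y \<notin> core_pts k ?Y ?e)")
    case True then show ?thesis using main[OF xY yY xy dxy kx ky] by simp
  next
    case False
    then have "y \<in> core_pts k ?Y ?e" by auto
    then have "same_comp ?F a y x" using main[OF yY xY xy[symmetric] _ ky kx] dxy by (simp add: dist_commute)
    then show ?thesis by (rule same_comp_sym)
  qed
qed

lemma Acomp:
  fixes X :: "(real ^ 'n::finite) set"
  assumes fX: "finite X" and e: "eps (Suc j) > 0" and ae: "a \<le> eps (Suc j)"
    and SF: "same_comp (Fgraph k eps X j) a x y"
  shows "same_comp (Hgraph k eps X (Suc j)) a x y"
proof (rule same_comp_transfer[OF _ _ SF])
  show "fst (Fgraph k eps X j) \<subseteq> fst (Hgraph k eps X (Suc j))" by (simp add: fst_Fgraph fst_Hgraph)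
next
  fix u v assume u: "u \<in> fst (Fgraph k eps X j)" and v: "v \<in> fst (Fgraph k eps X j)" and uv: "u \<noteq> v"
    and w: "snd (Fgraph k eps X j) u v \<le> ereal a"
  let ?Y = "Xs k eps X j"
  let ?e = "eps (Suc j)"
  have fY: "finite ?Y" using Xs_sub fX by (rule finite_subset)
  have uvX: "u \<in> X" "v \<in> X" using u v by (simp_all add: fst_Fgraph)
  have "snd (Hgraph k eps X (Suc j)) u v \<le> ereal a"
  proof (cases "snd (Hgraph k eps X j) u v \<le> ereal a")
    case True then show ?thesis using H_mono_step order_trans by metis
  next
    case False
    then have wG: "snd (complete_graph ?Y (rho k ?Y)) u v \<le> ereal a"
      using w unfolding Fgraph_def snd_union by (auto simp: min_le_iff_disj)
    then have uY: "u \<in> ?Y" and vY: "v \<in> ?Y" and r: "rho k ?Y u v \<le> ereal a"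
      using uv by (auto simp: snd_complete split: if_splits)
    have parts: "core_dist k ?Y u \<le> ereal a" "core_dist k ?Y v \<le> ereal a" "dist u v \<le> a"
      using rho_le_parts[OF r uv] by auto
    have a0: "0 \<le> a" using parts(3) zero_le_dist order_trans by metis
    have ku: "k \<le> cnt ?Y u a" and kv: "k \<le> cnt ?Y v a" using parts core_dist_le_iff[OF fY a0] by auto
    have "cnt ?Y u a \<le> cnt ?Y u ?e" "cnt ?Y v a \<le> cnt ?Y v ?e" using cnt_mono_a[OF fY ae] by auto
    then have uK: "u \<in> core_pts k ?Y ?e" and vK: "v \<in> core_pts k ?Y ?e"
      using ku kv uY vY core_pts_iff[OF fY] e by auto
    let ?C = "cl k ?Y ?e u"
    have C: "?C \<in> Dstar k ?Y ?e" by (rule cl_in_Dstar[OF uK])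
    have uC: "u \<in> ?C" using uK by simp
    have "dist u v \<le> ?e" using parts(3) ae by simp
    then have vC: "v \<in> ?C" using Dstar_closed[OF C uC vK] by simp
    show ?thesis by (rule Hedge[OF fX C uC vC uv a0 ae ku kv parts(3)])
  qed
  then show "same_comp (Hgraph k eps X (Suc j)) a u v"
    using uvX uv by (intro same_comp_edge) (auto simp: fst_Hgraph)
qed

lemma S_all:
  fixes X :: "(real ^ 'n::finite) set"
  assumes fX: "finite X" and e0: "eps 0 = 0" and sm: "strict_mono eps"
  shows "\<And>a x y. x \<in> X \<Longrightarrow> y \<in> X \<Longrightarrow> x \<noteq> y \<Longrightarrow> rho k X x y \<le> ereal a \<Longrightarrow>
           same_comp (Fgraph k eps X m) a x y"
proof (induction m)
  case (0 a x y)
  have "snd (Fgraph k eps X 0) x y \<le> ereal a"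
    using F_le_G[of k eps X 0 x y] 0 by (auto simp: snd_complete intro: order_trans)
  then show ?case using 0 by (intro same_comp_edge) (auto simp: fst_Fgraph)
next
  case (Suc m a x y)
  have epos: "eps (Suc m) > 0" using sm e0 by (metis strict_monoD zero_less_Suc)
  show ?case
  proof (cases "eps (Suc m) \<le> a")
    case True
    have SF: "same_comp (Fgraph k eps X m) a x y" by (rule Suc.IH[OF Suc.prems])
    show ?thesis
    proof (rule same_comp_transfer[OF _ _ SF])
      show "fst (Fgraph k eps X m) \<subseteq> fst (Fgraph k eps X (Suc m))" by (simp add: fst_Fgraph)
    next
      fix u v assume u: "u \<in> fst (Fgraph k eps X m)" and v: "v \<in> fst (Fgraph k eps X m)" and uv: "u \<noteq> v"
        and w: "snd (Fgraph k eps X m) u v \<le> ereal a"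
      have uvX: "u \<in> X" "v \<in> X" using u v by (simp_all add: fst_Fgraph)
      show "same_comp (Fgraph k eps X (Suc m)) a u v"
      proof (cases "snd (Hgraph k eps X m) u v \<le> ereal a")
        case True
        then have "snd (Fgraph k eps X (Suc m)) u v \<le> ereal a"
          using F_le_H H_mono_step order_trans by metis
        then show ?thesis using uvX uv by (intro same_comp_edge) (auto simp: fst_Fgraph)
      next
        case False
        then have wG: "snd (complete_graph (Xs k eps X m) (rho k (Xs k eps X m))) u v \<le> ereal a"
          using w unfolding Fgraph_def snd_union by (auto simp: min_le_iff_disj)
        then have uY: "u \<in> Xs k eps X m" and vY: "v \<in> Xs k eps X m" and r: "rho k (Xs k eps X m) u v \<le> ereal a"
          using uv by (auto simp: snd_complete split: if_splits)
        show ?thesis by (rule OS[OF fX epos True uY vY uv r])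
      qed
    qed
  next
    case False
    have SF: "same_comp (Fgraph k eps X m) a x y" by (rule Suc.IH[OF Suc.prems])
    have h: "same_comp (Hgraph k eps X (Suc m)) a x y" by (rule Acomp[OF fX epos _ SF]) (use False in simp)
    show ?thesis
    proof (rule same_comp_mono[OF _ _ order_refl h])
      show "fst (Hgraph k eps X (Suc m)) \<subseteq> fst (Fgraph k eps X (Suc m))" by (simp only: fst_Hgraph fst_Fgraph order_refl)
      fix x y show "snd (Fgraph k eps X (Suc m)) x y \<le> snd (Hgraph k eps X (Suc m)) x y" by (rule F_le_H)
    qed
  qed
qed

lemma complete_to_F:
  fixes X :: "(real ^ 'n::finite) set"
  assumes fX: "finite X" and e0: "eps 0 = 0" and sm: "strict_mono eps"
    and sc: "same_comp (complete_graph X (rho k X)) a p q"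
  shows "same_comp (Fgraph k eps X m) a p q"
proof (rule same_comp_transfer[OF _ _ sc])
  show "fst (complete_graph X (rho k X)) \<subseteq> fst (Fgraph k eps X m)" by (simp add: fst_Fgraph)
next
  fix x y assume "x \<in> fst (complete_graph X (rho k X))" "y \<in> fst (complete_graph X (rho k X))" "x \<noteq> y"
    "snd (complete_graph X (rho k X)) x y \<le> ereal a"
  then show "same_comp (Fgraph k eps X m) a x y"
    using S_all[OF fX e0 sm] by (auto simp: snd_complete)
qed

theorem theorem5p10:
  fixes X :: "(real ^ 'n::finite) set" and k :: nat and eps :: "nat \<Rightarrow> real"
    and i :: nat and \<nu> \<alpha> :: real and p q :: "real ^ 'n"
  assumes "CARD('n) \<ge> 2"
    and "finite X"
    and "eps 0 = 0" and "strict_mono eps"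
    and "i \<ge> 1"
    and "eps (i - 1) < \<nu>" and "\<nu> \<le> eps i"
    and "\<alpha> \<ge> 0"
    and "p \<in> X" and "q \<in> X" and "p \<noteq> q"
  shows "(same_comp (Hgraph k eps X i) \<nu> p q \<longleftrightarrow>
            same_comp (complete_graph X (rho k X)) \<nu> p q)
       \<and> (same_comp (Fgraph k eps X i) \<alpha> p q \<longleftrightarrow>
            same_comp (complete_graph X (rho k X)) \<alpha> p q)"
proof -
  note fX = assms(2) and e0 = assms(3) and sm = assms(4)
  obtain j where ij: "i = Suc j" using assms(5) by (metis Suc_pred' less_eq_Suc_le zero_less_Suc not0_implies_Suc one_neq_zero le_0_eq)
  have epos: "eps (Suc j) > 0" using sm e0 by (metis strict_monoD zero_less_Suc)
  have A1: "same_comp (complete_graph X (rho k X)) \<nu> p q" if "same_comp (Hgraph k eps X i) \<nu> p q"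
    using sound_same_comp[OF fst_Hgraph _ that] H_sound[OF fX] by blast
  have A2: "same_comp (Hgraph k eps X i) \<nu> p q" if "same_comp (complete_graph X (rho k X)) \<nu> p q"
  proof -
    have h: "same_comp (Fgraph k eps X j) \<nu> p q" by (rule complete_to_F[OF fX e0 sm that])
    have nj: "\<nu> \<le> eps (Suc j)" using assms(7) ij by simp
    show ?thesis unfolding ij by (rule Acomp[where eps=eps and j=j, OF fX epos nj h])
  qed
  have B1: "same_comp (complete_graph X (rho k X)) \<alpha> p q" if "same_comp (Fgraph k eps X i) \<alpha> p q"
    using sound_same_comp[OF fst_Fgraph _ that] F_sound[OF fX] by blast
  have B2: "same_comp (Fgraph k eps X i) \<alpha> p q" if "same_comp (complete_graph X (rho k X)) \<alpha> p q"
    by (rule complete_to_F[OF fX e0 sm that])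
  show ?thesis using A1 A2 B1 B2 by blast
qed


end
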